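(* Let $\nabla$ be a module connection on $M$ with associated connection $(\mathsf K_\nabla,\mathsf H_\nabla)$ on $\mathsf q_M$, and suppose $2$ is a unit in $A$. Then $\nabla^2(m)=\tfrac12\,\phi(\mathsf C_{\mathsf K_\nabla}(m))$ for all $m\in M$. Moreover, $\nabla^2=0$ if and only if $(\mathsf K_\nabla,\mathsf H_\nabla)$ is flat.
   Context: Fix a commutative ring $R$, a commutative $R$-algebra $A$ and an $A$-module $M$; algebra maps are $R$-algebra homomorphisms. $\Omega(A)$ is the Kähler module of $A$ over $R$ with universal derivation $\mathsf d$, and a module connection on $M$ is an $R$-linear $\nabla:M\to\Omega(A)\otimes_AM$ with $\nabla(am)=a\nabla(m)+\mathsf d(a)\otimes m$. $\mathsf S_A(M)$ is the symmetric $A$-algebra on $M$; for an algebra $B$, $\mathsf T(B)=\mathrm{Sym}_B(\Omega(B))$ with universal derivation $\mathsf d:B\to\mathsf T(B)$, and $\mathsf T^2(B)=\mathsf T(\mathsf T(B))$ with universal derivation $\mathsf d':\mathsf T(B)\to\mathsf T^2(B)$. For an algebra map $h:X\to Y$, $\mathsf T(h)$ sends $x\mapsto h(x)$ and $\delta_X(x)\mapsto\delta_Y(h(x))$ ($\delta$ the universal derivations). $\mathsf c_B:\mathsf T^2(B)\to\mathsf T^2(B)$ is the algebra map $b\mapsto b$, $\mathsf d(b)\mapsto\mathsf d'(b)$, $\mathsf d'(b)\mapsto\mathsf d(b)$, $\mathsf d'\mathsf d(b)\mapsto\mathsf d'\mathsf d(b)$. $\mathsf K_\nabla:\mathsf S_A(M)\to\mathsf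 T(\mathsf S_A(M))$ is the algebra map $a\mapsto a$, $m\mapsto\mathsf d(m)-\sum_im_i\,\mathsf d(a_i)$ where $\nabla(m)=\sum_i\mathsf d(a_i)\otimes m_i$ (and $\mathsf H_\nabla$ is the algebra map $a\mapsto a\otimes1$, $m\mapsto1\otimes m$, $\mathsf d(a)\mapsto\mathsf d(a)\otimes1$, $\mathsf d(m)\mapsto\nabla(m)$). Let $\Omega^2(A)=\Omega(A)\wedge_A\Omega(A)$. Every element of $\Omega(A)\otimes_AM$ can be written as $\sum_i\mathsf d(a_i)\otimes m_i$. The curvature of $\nabla$ is $\nabla^2:M\to\Omega^2(A)\otimes_AM$, $\nabla^2(m)=\sum_i\sum_j(\mathsf d(a_i)\wedge\mathsf d(a_{ij}))\otimes m_{ij}$ where $\nabla(m)=\sum_i\mathsf d(a_i)\otimes m_i$ and $\nabla(m_i)=\sum_j\mathsf d(a_{ij})\otimes m_{ij}$ (the composite $(\omega\otimes1)\circ(1\otimes\nabla)\circ\nabla$ with $\omega(\alpha\otimes\beta)=\alpha\wedge\beta$). For a vertical connection $\mathsf K:\mathsf S_A(M)\to\mathsf T(\mathsf S_A(M))$, its curvature is the algebra map $\mathsf C_{\mathsf K}:\mathsf S_A(M)\to\mathsf T^2(\mathsf S_A(M))$ with $\mathsf C_{\mathsf K}(a)=\mathsf c_{\mathsf S_A(M)}(\mathsf T(\mathsf K)(\mathsf K(a)))$ and $\mathsf C_{\mathsf K}(m)=\mathsf c_{\mathsf S_A(M)}(\mathsf T(\mathsf K)(\mathsf K(m)))-\mathsf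 T(\mathsf K)(\mathsf K(m))$; the connection is flat if $\mathsf C_{\mathsf K}(a)=a$ and $\mathsf C_{\mathsf K}(m)=0$ for all $a\in A$, $m\in M$. The map $\phi:\mathsf T^2(\mathsf S_A(M))\to\Omega^2(A)\otimes_AM$ is the additive map sending each monomial of the form $m\,\mathsf d(a)\mathsf d'(b)$ ($m\in M$, $a,b\in A$) to $(\mathsf d(a)\wedge\mathsf d(b))\otimes m$ and all monomials of other forms to $0$. *)

theory Defs
  imports Main "HOL.Modules" "HOL-Library.Poly_Mapping"
begin

type_synonym ('v, 'r) mp = "('v \<Rightarrow>\<^sub>0 nat) \<Rightarrow>\<^sub>0 'r"

definition Var :: "'v \<Rightarrow> ('v, 'r::comm_ring_1) mp" where
  "Var v = Poly_Mapping.single (Poly_Mapping.single v 1) 1"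

definition Const :: "'r::comm_ring_1 \<Rightarrow> ('v, 'r) mp" where
  "Const r = Poly_Mapping.single 0 r"

definition subst :: "('v \<Rightarrow> ('w, 'r::comm_ring_1) mp) \<Rightarrow> ('v, 'r) mp \<Rightarrow> ('w, 'r) mp" where
  "subst \<sigma> p = (\<Sum>mon\<in>Poly_Mapping.keys p. Const (Poly_Mapping.lookup p mon) *
      (\<Prod>v\<in>Poly_Mapping.keys (mon :: 'v \<Rightarrow>\<^sub>0 nat). \<sigma> v ^ Poly_Mapping.lookup mon v))"

definition pdiff :: "'v \<Rightarrow> ('v, 'r::comm_ring_1) mp \<Rightarrow> ('v, 'r) mp" where
  "pdiff v p = (\<Sum>mon\<in>Poly_Mapping.keys p.
      Poly_Mapping.single (mon - Poly_Mapping.single v 1) (of_nat (Poly_Mapping.lookup mon v) * Poly_Mapping.lookup p mon))"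

definition pvars :: "('v, 'r::comm_ring_1) mp \<Rightarrow> 'v set" where
  "pvars p = (\<Union>mon\<in>Poly_Mapping.keys p. Poly_Mapping.keys mon)"

text \<open>Inclusion B \<rightarrow> T(B) (variable v of B becomes generator Inl v) and the universal
  derivation d : B \<rightarrow> T(B) (d v = generator Inr v), on representatives.\<close>
definition Emb :: "('v, 'r::comm_ring_1) mp \<Rightarrow> ('v + 'v, 'r) mp" where
  "Emb p = subst (\<lambda>v. Var (Inl v)) p"

definition Der :: "('v, 'r::comm_ring_1) mp \<Rightarrow> ('v + 'v, 'r) mp" where
  "Der p = (\<Sum>v\<in>pvars p. Emb (pdiff v p) * Var (Inr v))"

inductive_set gen_subgroup :: "'g::ab_group_add set \<Rightarrow> 'g set" for G where
  zero: "0 \<in> gen_subgroup G"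
| add: "x \<in> G \<Longrightarrow> y \<in> gen_subgroup G \<Longrightarrow> y + x \<in> gen_subgroup G"
| diff: "x \<in> G \<Longrightarrow> y \<in> gen_subgroup G \<Longrightarrow> y - x \<in> gen_subgroup G"

definition gen_ideal :: "'g::comm_ring_1 set \<Rightarrow> 'g set" where
  "gen_ideal G = gen_subgroup {p * g | p g. g \<in> G}"

text \<open>For a presented algebra B = R[V]/J, T(B) = Sym_B(Omega(B)) = R[V + dV]/(J, dJ).\<close>
definition Tideal :: "('v, 'r::comm_ring_1) mp set \<Rightarrow> ('v + 'v, 'r) mp set" where
  "Tideal J = gen_ideal (Emb ` J \<union> Der ` J)"

text \<open>T(h) for the algebra map h = subst sigma : X \<rightarrow> T(Y)-style targets:
  x \<mapsto> h x, d x \<mapsto> d (h x).\<close>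
definition Tmap :: "('v \<Rightarrow> ('w, 'r::comm_ring_1) mp) \<Rightarrow> ('v + 'v, 'r) mp \<Rightarrow> ('w + 'w, 'r) mp" where
  "Tmap \<sigma> = subst (\<lambda>x. case x of Inl v \<Rightarrow> Emb (\<sigma> v) | Inr v \<Rightarrow> Der (\<sigma> v))"

text \<open>Generators of T^2(B): b = Inl (Inl b), d b = Inl (Inr b), d' b = Inr (Inl b),
  d'd b = Inr (Inr b).  The flip c_B swaps d and d'.\<close>
fun cflip :: "('v + 'v) + ('v + 'v) \<Rightarrow> ('v + 'v) + ('v + 'v)" where
  "cflip (Inl (Inl v)) = Inl (Inl v)"
| "cflip (Inl (Inr v)) = Inr (Inl v)"
| "cflip (Inr (Inl v)) = Inl (Inr v)"
| "cflip (Inr (Inr v)) = Inr (Inr v)"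

definition cmap :: "(('v + 'v) + ('v + 'v), 'r::comm_ring_1) mp \<Rightarrow> (('v + 'v) + ('v + 'v), 'r) mp" where
  "cmap = subst (\<lambda>x. Var (cflip x))"

section \<open>The symmetric algebra S_A(M) (generators Inl a for a in A, Inr m for m in M)\<close>

definition SA_rels :: "('r::comm_ring_1 \<Rightarrow> 'a::comm_ring_1) \<Rightarrow> ('a \<Rightarrow> 'm::ab_group_add \<Rightarrow> 'm)
    \<Rightarrow> ('a + 'm, 'r) mp set" where
  "SA_rels \<iota> smult =
     {Var (Inl (a + b)) - Var (Inl a) - Var (Inl b) | a b. True}
   \<union> {Var (Inl (a * b)) - Var (Inl a) * Var (Inl b) | a b. True}
   \<union> {Var (Inl 1) - 1}
   \<union> {Var (Inl (\<iota> r)) - Const r | r. True}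
   \<union> {Var (Inr (m + n)) - Var (Inr m) - Var (Inr n) | m n. True}
   \<union> {Var (Inr (smult a m)) - Var (Inl a) * Var (Inr m) | a m. True}"

definition SA_ideal where "SA_ideal \<iota> smult = gen_ideal (SA_rels \<iota> smult)"

definition T2_ideal where "T2_ideal \<iota> smult = Tideal (Tideal (SA_ideal \<iota> smult))"

text \<open>A representative of an element of Omega(A) \<otimes>_A M is a finite Z-combination of
  symbols (a, m) standing for d(a) \<otimes> m; similarly (a, b, m) stands for
  (d(a) \<and> d(b)) \<otimes> m in Omega^2(A) \<otimes>_A M.\<close>
definition OM1_rels :: "('r::comm_ring_1 \<Rightarrow> 'a::comm_ring_1) \<Rightarrow> ('a \<Rightarrow> 'm::ab_group_add \<Rightarrow> 'm)
    \<Rightarrow> (('a \<times> 'm) \<Rightarrow>\<^sub>0 int) set" where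
  "OM1_rels \<iota> smult =
     {Poly_Mapping.single (a + b, m) 1 - Poly_Mapping.single (a, m) 1 - Poly_Mapping.single (b, m) 1 | a b m. True}
   \<union> {Poly_Mapping.single (a, m + n) 1 - Poly_Mapping.single (a, m) 1 - Poly_Mapping.single (a, n) 1 | a m n. True}
   \<union> {Poly_Mapping.single (a * b, m) 1 - Poly_Mapping.single (a, smult b m) 1
        - Poly_Mapping.single (b, smult a m) 1 | a b m. True}
   \<union> {Poly_Mapping.single (\<iota> r, m) 1 | r m. True}"

definition OM1_eq where
  "OM1_eq \<iota> smult x y \<longleftrightarrow> x - y \<in> gen_subgroup (OM1_rels \<iota> smult)"

definition OM1_scale :: "('a \<Rightarrow> 'm \<Rightarrow> 'm) \<Rightarrow> 'a \<Rightarrow> (('a \<times> 'm) \<Rightarrow>\<^sub>0 int) \<Rightarrow> (('a \<times> 'm) \<Rightarrow>\<^sub>0 int)" where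
  "OM1_scale smult c x = (\<Sum>k\<in>Poly_Mapping.keys x. Poly_Mapping.single (fst k, smult c (snd k)) (Poly_Mapping.lookup x k))"

definition OM2_rels :: "('r::comm_ring_1 \<Rightarrow> 'a::comm_ring_1) \<Rightarrow> ('a \<Rightarrow> 'm::ab_group_add \<Rightarrow> 'm)
    \<Rightarrow> (('a \<times> 'a \<times> 'm) \<Rightarrow>\<^sub>0 int) set" where
  "OM2_rels \<iota> smult =
     {Poly_Mapping.single (a + a', b, m) 1 - Poly_Mapping.single (a, b, m) 1 - Poly_Mapping.single (a', b, m) 1 | a a' b m. True}
   \<union> {Poly_Mapping.single (a, b + b', m) 1 - Poly_Mapping.single (a, b, m) 1 - Poly_Mapping.single (a, b', m) 1 | a b b' m. True}
   \<union> {Poly_Mapping.single (a, b, m + n) 1 - Poly_Mapping.single (a, b, m) 1 - Poly_Mapping.single (a, b, n) 1 | a b m n. True}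
   \<union> {Poly_Mapping.single (a * c, b, m) 1 - Poly_Mapping.single (a, b, smult c m) 1
        - Poly_Mapping.single (c, b, smult a m) 1 | a b c m. True}
   \<union> {Poly_Mapping.single (a, b * c, m) 1 - Poly_Mapping.single (a, b, smult c m) 1
        - Poly_Mapping.single (a, c, smult b m) 1 | a b c m. True}
   \<union> {Poly_Mapping.single (\<iota> r, b, m) 1 | r b m. True}
   \<union> {Poly_Mapping.single (a, \<iota> r, m) 1 | a r m. True}
   \<union> {Poly_Mapping.single (a, a, m) 1 | a m. True}"

definition OM2_eq where
  "OM2_eq \<iota> smult x y \<longleftrightarrow> x - y \<in> gen_subgroup (OM2_rels \<iota> smult)"

definition OM2_scale :: "('a \<Rightarrow> 'm \<Rightarrow> 'm) \<Rightarrow> 'a \<Rightarrow> (('a \<times> 'a \<times> 'm) \<Rightarrow>\<^sub>0 int) \<Rightarrow> (('a \<times> 'a \<times> 'm) \<Rightarrow>\<^sub>0 int)" where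
  "OM2_scale smult c x =
     (\<Sum>k\<in>Poly_Mapping.keys x. Poly_Mapping.single (fst k, fst (snd k), smult c (snd (snd k))) (Poly_Mapping.lookup x k))"

text \<open>nabla m is a representative of nabla(m) = sum_i d(a_i) \<otimes> m_i.\<close>
definition module_connection ::
  "('r::comm_ring_1 \<Rightarrow> 'a::comm_ring_1) \<Rightarrow> ('a \<Rightarrow> 'm::ab_group_add \<Rightarrow> 'm) \<Rightarrow> ('m \<Rightarrow> (('a \<times> 'm) \<Rightarrow>\<^sub>0 int)) \<Rightarrow> bool" where
  "module_connection \<iota> smult nabla \<longleftrightarrow>
     (\<forall>m n. OM1_eq \<iota> smult (nabla (m + n)) (nabla m + nabla n)) \<and>
     (\<forall>r m. OM1_eq \<iota> smult (nabla (smult (\<iota> r) m)) (OM1_scale smult (\<iota> r) (nabla m))) \<and>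
     (\<forall>a m. OM1_eq \<iota> smult (nabla (smult a m))
              (OM1_scale smult a (nabla m) + Poly_Mapping.single (a, m) 1))"

definition curvature :: "('m \<Rightarrow> (('a \<times> 'm) \<Rightarrow>\<^sub>0 int)) \<Rightarrow> 'm \<Rightarrow> (('a \<times> 'a \<times> 'm) \<Rightarrow>\<^sub>0 int)" where
  "curvature nabla m =
     (\<Sum>x\<in>Poly_Mapping.keys (nabla m). \<Sum>y\<in>Poly_Mapping.keys (nabla (snd x)).
        Poly_Mapping.single (fst x, fst y, snd y) (Poly_Mapping.lookup (nabla m) x * Poly_Mapping.lookup (nabla (snd x)) y))"

text \<open>The vertical connection K_nabla : S_A(M) \<rightarrow> T(S_A(M)) on generators:
  a \<mapsto> a, m \<mapsto> d(m) - sum_i m_i d(a_i).\<close>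
fun Kgen :: "('m \<Rightarrow> (('a \<times> 'm) \<Rightarrow>\<^sub>0 int)) \<Rightarrow> 'a + 'm \<Rightarrow> (('a + 'm) + ('a + 'm), 'r::comm_ring_1) mp" where
  "Kgen nabla (Inl a) = Var (Inl (Inl a))"
| "Kgen nabla (Inr m) = Var (Inr (Inr m)) -
     (\<Sum>x\<in>Poly_Mapping.keys (nabla m). Const (of_int (Poly_Mapping.lookup (nabla m) x)) * Var (Inl (Inr (snd x))) * Var (Inr (Inl (fst x))))"

definition Kmap :: "('m \<Rightarrow> (('a \<times> 'm) \<Rightarrow>\<^sub>0 int)) \<Rightarrow> ('a + 'm, 'r::comm_ring_1) mp \<Rightarrow> (('a + 'm) + ('a + 'm), 'r) mp" where
  "Kmap nabla = subst (Kgen nabla)"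

definition CK_A :: "('m \<Rightarrow> (('a \<times> 'm) \<Rightarrow>\<^sub>0 int)) \<Rightarrow> 'a \<Rightarrow> ((('a + 'm) + ('a + 'm)) + (('a + 'm) + ('a + 'm)), 'r::comm_ring_1) mp" where
  "CK_A nabla a = cmap (Tmap (Kgen nabla) (Kmap nabla (Var (Inl a))))"

definition CK_M :: "('m \<Rightarrow> (('a \<times> 'm) \<Rightarrow>\<^sub>0 int)) \<Rightarrow> 'm \<Rightarrow> ((('a + 'm) + ('a + 'm)) + (('a + 'm) + ('a + 'm)), 'r::comm_ring_1) mp" where
  "CK_M nabla m = cmap (Tmap (Kgen nabla) (Kmap nabla (Var (Inr m))))
                  - Tmap (Kgen nabla) (Kmap nabla (Var (Inr m)))"

definition flat_conn :: "('r::comm_ring_1 \<Rightarrow> 'a::comm_ring_1) \<Rightarrow> ('a \<Rightarrow> 'm::ab_group_add \<Rightarrow> 'm)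
    \<Rightarrow> ('m \<Rightarrow> (('a \<times> 'm) \<Rightarrow>\<^sub>0 int)) \<Rightarrow> bool" where
  "flat_conn \<iota> smult nabla \<longleftrightarrow>
     (\<forall>a. (CK_A nabla a :: _ \<Rightarrow>\<^sub>0 'r) - Var (Inl (Inl (Inl a))) \<in> T2_ideal \<iota> smult) \<and>
     (\<forall>m. (CK_M nabla m :: _ \<Rightarrow>\<^sub>0 'r) \<in> T2_ideal \<iota> smult)"

text \<open>The monomial m d(a) d'(b).\<close>
definition mon3 :: "'m \<Rightarrow> 'a \<Rightarrow> 'a \<Rightarrow> ((('a + 'm) + ('a + 'm)) + (('a + 'm) + ('a + 'm))) \<Rightarrow>\<^sub>0 nat" where
  "mon3 m a b = Poly_Mapping.single (Inl (Inl (Inr m))) 1 + Poly_Mapping.single (Inl (Inr (Inl a))) 1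
              + Poly_Mapping.single (Inr (Inl (Inl b))) 1"

definition phi_mon :: "('r::comm_ring_1 \<Rightarrow> 'a) \<Rightarrow> ('a \<Rightarrow> 'm \<Rightarrow> 'm) \<Rightarrow> 'r
    \<Rightarrow> (((('a + 'm) + ('a + 'm)) + (('a + 'm) + ('a + 'm))) \<Rightarrow>\<^sub>0 nat) \<Rightarrow> (('a \<times> 'a \<times> 'm) \<Rightarrow>\<^sub>0 int)" where
  "phi_mon \<iota> smult r mon =
     (if \<exists>m a b. mon = mon3 m a b
      then (case THE (m, a, b). mon = mon3 m a b of
              (m, a, b) \<Rightarrow> Poly_Mapping.single (a, b, smult (\<iota> r) m) 1)
      else 0)"

definition phi :: "('r::comm_ring_1 \<Rightarrow> 'a) \<Rightarrow> ('a \<Rightarrow> 'm \<Rightarrow> 'm)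
    \<Rightarrow> ((('a + 'm) + ('a + 'm)) + (('a + 'm) + ('a + 'm)), 'r) mp \<Rightarrow> (('a \<times> 'a \<times> 'm) \<Rightarrow>\<^sub>0 int)" where
  "phi \<iota> smult p = (\<Sum>mon\<in>Poly_Mapping.keys p. phi_mon \<iota> smult (Poly_Mapping.lookup p mon) mon)"

end

theory Submission
  imports Defs
begin

section \<open>Subgroups and ideals\<close>

lemma gs_base: "x \<in> G \<Longrightarrow> x \<in> gen_subgroup G"
  using gen_subgroup.add[OF _ gen_subgroup.zero] by fastforce

lemma gs_add: assumes "x \<in> gen_subgroup G" "y \<in> gen_subgroup G" shows "x + y \<in> gen_subgroup G"
  using assms(2)
proof (induction y rule: gen_subgroup.induct)
  case zero then show ?case using assms(1) by simp
next
  case (add g y) then show ?case using gen_subgroup.add[of g G "x+y"] by (simp add: add.assoc)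
next
  case (diff g y) then show ?case using gen_subgroup.diff[of g G "x+y"] by (simp add: add_diff_eq)
qed

lemma gs_uminus: "y \<in> gen_subgroup G \<Longrightarrow> - y \<in> gen_subgroup G"
proof (induction y rule: gen_subgroup.induct)
  case zero then show ?case by (simp add: gen_subgroup.zero)
next
  case (add g y)
  have "- (y + g) = - y - g" by simp
  then show ?case using add gen_subgroup.diff[of g G "-y"] by metis
next
  case (diff g y)
  have "- (y - g) = - y + g" by simp
  then show ?case using diff gen_subgroup.add[of g G "-y"] by metis
qed

lemma gs_diff: "x \<in> gen_subgroup G \<Longrightarrow> y \<in> gen_subgroup G \<Longrightarrow> x - y \<in> gen_subgroup G"
  using gs_add[OF _ gs_uminus] by (metis diff_conv_add_uminus)

lemma gs_zero: "0 \<in> gen_subgroup G" by (rule gen_subgroup.zero)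

lemma gs_sum: "(\<And>i. i \<in> S \<Longrightarrow> f i \<in> gen_subgroup G) \<Longrightarrow> sum f S \<in> gen_subgroup G"
  by (induction S rule: infinite_finite_induct) (auto intro: gs_add gs_zero)

lemma gs_hom:
  assumes fadd: "\<And>x y. f (x + y) = f x + f y"
    and base: "\<And>g. g \<in> G \<Longrightarrow> f g \<in> gen_subgroup H"
    and x: "x \<in> gen_subgroup G"
  shows "f x \<in> gen_subgroup H"
proof -
  have f0: "f 0 = 0" using fadd[of 0 0] by simp
  have fd: "f (a - b) = f a - f b" for a b using fadd[of "a - b" b] by (simp add: algebra_simps)
  from x show ?thesis
  proof (induction x rule: gen_subgroup.induct)
    case zero then show ?case by (simp add: f0 gs_zero)
  next
    case (add g y) then show ?case using fadd[of y g] gs_add base by metis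
  next
    case (diff g y) then show ?case by (simp add: fd gs_diff base)
  qed
qed

lemma gs_mono: "G \<subseteq> H \<Longrightarrow> x \<in> gen_subgroup G \<Longrightarrow> x \<in> gen_subgroup H"
  by (rule gs_hom[where f=id, simplified]) (auto intro: gs_base)

lemma gi_base: "(g::'a::comm_ring_1) \<in> G \<Longrightarrow> g \<in> gen_ideal G"
  unfolding gen_ideal_def by (rule gs_base) (metis (mono_tags, lifting) mem_Collect_eq mult_1)

lemma gi_mult: assumes "(x::'a::comm_ring_1) \<in> gen_ideal G" shows "p * x \<in> gen_ideal G"
  unfolding gen_ideal_def
proof (rule gs_hom[where f="\<lambda>x. p * x"])
  fix g assume "g \<in> {p * g |p g. g \<in> G}"
  then obtain q h where "g = q * h" "h \<in> G" by blast
  then have "p * g = (p * q) * h" by (simp add: mult.assoc)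
  then show "p * g \<in> gen_subgroup {p * g |p g. g \<in> G}" using \<open>h \<in> G\<close> by (auto intro!: gs_base)
next
  show "p * (x + y) = p * x + p * y" for x y by (rule distrib_left)
qed (rule assms[unfolded gen_ideal_def])

lemma gi_mult2: "(x::'a::comm_ring_1) \<in> gen_ideal G \<Longrightarrow> x * p \<in> gen_ideal G"
  using gi_mult by (metis mult.commute)

lemma gi_add: "x \<in> gen_ideal G \<Longrightarrow> y \<in> gen_ideal G \<Longrightarrow> x + y \<in> gen_ideal G"
  unfolding gen_ideal_def by (rule gs_add)
lemma gi_diff: "x \<in> gen_ideal G \<Longrightarrow> y \<in> gen_ideal G \<Longrightarrow> x - y \<in> gen_ideal G"
  unfolding gen_ideal_def by (rule gs_diff)
lemma gi_uminus: "x \<in> gen_ideal G \<Longrightarrow> - x \<in> gen_ideal G"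
  unfolding gen_ideal_def by (rule gs_uminus)
lemma gi_zero: "0 \<in> gen_ideal G"
  unfolding gen_ideal_def by (rule gs_zero)
lemma gi_sum: "(\<And>i. i \<in> S \<Longrightarrow> f i \<in> gen_ideal G) \<Longrightarrow> sum f S \<in> gen_ideal G"
  unfolding gen_ideal_def by (rule gs_sum)

lemma gi_hom:
  assumes add: "\<And>x y. f (x + y) = f x + f y"
    and base: "\<And>p g. g \<in> G \<Longrightarrow> f (p * g) \<in> gen_subgroup H"
    and x: "x \<in> gen_ideal G"
  shows "f x \<in> gen_subgroup H"
proof (rule gs_hom[OF add])
  show "x \<in> gen_subgroup {p * g |p g. g \<in> G}" using x by (simp add: gen_ideal_def)
  fix g assume "g \<in> {p * g |p g. g \<in> G}"
  then show "f g \<in> gen_subgroup H" using base by blast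
qed

section \<open>Polynomial basics\<close>

lemma Const_add: "Const (a + b) = (Const a + Const b :: ('v,'r::comm_ring_1) mp)"
  by (simp add: Const_def single_add)
lemma Const_mult: "Const (a * b) = (Const a * Const b :: ('v,'r::comm_ring_1) mp)"
  by (simp add: Const_def mult_single)
lemma Const_one[simp]: "Const 1 = (1 :: ('v,'r::comm_ring_1) mp)"
  by (simp add: Const_def)
lemma Const_zero[simp]: "Const 0 = (0 :: ('v,'r::comm_ring_1) mp)"
  by (simp add: Const_def)
lemma Const_diff: "Const (a - b) = (Const a - Const b :: ('v,'r::comm_ring_1) mp)"
  by (simp add: Const_def single_diff)
lemma Const_uminus: "Const (- a) = (- Const a :: ('v,'r::comm_ring_1) mp)"
  by (simp add: Const_def single_uminus)
lemma Const_of_int: "Const (of_int k) = (of_int k :: ('v,'r::comm_ring_1) mp)"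
  by (simp add: Const_def)
lemma Const_mult_single: "Const c * Poly_Mapping.single m d = Poly_Mapping.single m (c * d)"
  by (simp add: Const_def mult_single)

lemma Var_pow: "Var v ^ n = (Poly_Mapping.single (Poly_Mapping.single v n) 1 :: ('v,'r::comm_ring_1) mp)"
  by (induction n) (simp_all add: Var_def mult_single single_add[symmetric] add.commute)

lemma prod_single_single:
  "finite S \<Longrightarrow> (\<Prod>v\<in>S. (Poly_Mapping.single (Poly_Mapping.single v (f v)) 1 :: ('v,'r::comm_ring_1) mp))
     = Poly_Mapping.single (\<Sum>v\<in>S. Poly_Mapping.single v (f v)) 1"
  by (induction S rule: finite_induct) (simp_all add: mult_single)

lemma sum_single_keys: "(\<Sum>v\<in>Poly_Mapping.keys m. Poly_Mapping.single v (Poly_Mapping.lookup m v)) = m"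
proof (rule poly_mapping_eqI)
  fix k
  show "Poly_Mapping.lookup (\<Sum>v\<in>Poly_Mapping.keys m. Poly_Mapping.single v (Poly_Mapping.lookup m v)) k = Poly_Mapping.lookup m k"
    by (simp add: lookup_sum lookup_single when_def in_keys_iff)
qed

lemma mon_expand: "Poly_Mapping.single mon c =
   (Const c * (\<Prod>v\<in>Poly_Mapping.keys mon. Var v ^ Poly_Mapping.lookup mon v) :: ('v,'r::comm_ring_1) mp)"
  by (simp add: Var_pow prod_single_single sum_single_keys Const_mult_single)

lemma poly_sum_singles: "(\<Sum>a\<in>Poly_Mapping.keys p. Poly_Mapping.single a (Poly_Mapping.lookup p a)) = p"
  by (rule sum_single_keys)

lemma keys_add_nat: "Poly_Mapping.keys (m1 + m2 :: 'v \<Rightarrow>\<^sub>0 nat) = Poly_Mapping.keys m1 \<union> Poly_Mapping.keys m2"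
  by (auto simp: in_keys_iff lookup_add)

section \<open>Generic evaluation\<close>

definition rhom :: "('r::comm_ring_1 \<Rightarrow> 'b::comm_ring_1) \<Rightarrow> bool" where
  "rhom \<phi> \<longleftrightarrow> (\<forall>x y. \<phi> (x + y) = \<phi> x + \<phi> y) \<and> (\<forall>x y. \<phi> (x * y) = \<phi> x * \<phi> y) \<and> \<phi> 1 = 1"

lemma rhom_Const: "rhom (Const :: 'r::comm_ring_1 \<Rightarrow> ('v,'r) mp)"
  by (simp add: rhom_def Const_add Const_mult)

lemma rhom_comp: "rhom f \<Longrightarrow> rhom g \<Longrightarrow> rhom (g \<circ> f)"
  by (simp add: rhom_def)

lemma rhom_add: "rhom \<phi> \<Longrightarrow> \<phi> (x + y) = \<phi> x + \<phi> y" by (simp add: rhom_def)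
lemma rhom_mult: "rhom \<phi> \<Longrightarrow> \<phi> (x * y) = \<phi> x * \<phi> y" by (simp add: rhom_def)
lemma rhom_one: "rhom \<phi> \<Longrightarrow> \<phi> 1 = 1" by (simp add: rhom_def)
lemma rhom_zero: "rhom \<phi> \<Longrightarrow> \<phi> 0 = 0" using rhom_add[of \<phi> 0 0] by simp
lemma rhom_uminus: "rhom \<phi> \<Longrightarrow> \<phi> (- x) = - \<phi> x"
  using rhom_add[of \<phi> x "-x"] rhom_zero[of \<phi>] by (simp add: eq_neg_iff_add_eq_0 add.commute)
lemma rhom_diff: "rhom \<phi> \<Longrightarrow> \<phi> (x - y) = \<phi> x - \<phi> y"
  using rhom_add[of \<phi> x "-y"] rhom_uminus[of \<phi> y] by simp
lemma rhom_of_int: "rhom \<phi> \<Longrightarrow> \<phi> (of_int k) = of_int k"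
proof (induction k rule: int_induct[where k=0])
  case base then show ?case by (simp add: rhom_zero)
next
  case (step1 i) then show ?case by (simp add: rhom_add rhom_one)
next
  case (step2 i) then show ?case by (simp add: rhom_diff rhom_one)
qed

definition monev :: "('v \<Rightarrow> 'b::comm_ring_1) \<Rightarrow> ('v \<Rightarrow>\<^sub>0 nat) \<Rightarrow> 'b" where
  "monev \<sigma> mon = (\<Prod>v\<in>Poly_Mapping.keys mon. \<sigma> v ^ Poly_Mapping.lookup mon v)"

definition geval :: "('r::comm_ring_1 \<Rightarrow> 'b::comm_ring_1) \<Rightarrow> ('v \<Rightarrow> 'b) \<Rightarrow> ('v,'r) mp \<Rightarrow> 'b" where
  "geval \<phi> \<sigma> p = (\<Sum>mon\<in>Poly_Mapping.keys p. \<phi> (Poly_Mapping.lookup p mon) * monev \<sigma> mon)"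

lemma subst_geval: "subst \<sigma> = geval Const \<sigma>"
  by (rule ext) (simp add: subst_def geval_def monev_def)

lemma monev_S: "finite S \<Longrightarrow> Poly_Mapping.keys mon \<subseteq> S \<Longrightarrow>
   monev \<sigma> mon = (\<Prod>v\<in>S. \<sigma> v ^ Poly_Mapping.lookup mon v)"
  unfolding monev_def by (rule prod.mono_neutral_left) (auto simp: in_keys_iff)

lemma monev_add: "monev \<sigma> (m1 + m2) = monev \<sigma> m1 * monev \<sigma> m2"
proof -
  let ?S = "Poly_Mapping.keys m1 \<union> Poly_Mapping.keys m2"
  have "monev \<sigma> (m1 + m2) = (\<Prod>v\<in>?S. \<sigma> v ^ Poly_Mapping.lookup (m1 + m2) v)"
    by (rule monev_S) (auto simp: keys_add_nat)
  also have "\<dots> = (\<Prod>v\<in>?S. \<sigma> v ^ Poly_Mapping.lookup m1 v) * (\<Prod>v\<in>?S. \<sigma> v ^ Poly_Mapping.lookup m2 v)"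
    by (simp add: lookup_add power_add prod.distrib)
  also have "\<dots> = monev \<sigma> m1 * monev \<sigma> m2"
    by (simp add: monev_S[of ?S m1] monev_S[of ?S m2])
  finally show ?thesis .
qed

lemma monev_zero[simp]: "monev \<sigma> 0 = 1" by (simp add: monev_def)
lemma monev_single: "monev \<sigma> (Poly_Mapping.single v n) = \<sigma> v ^ n"
  by (simp add: monev_def)

lemma geval_S: "rhom \<phi> \<Longrightarrow> finite S \<Longrightarrow> Poly_Mapping.keys p \<subseteq> S \<Longrightarrow>
   geval \<phi> \<sigma> p = (\<Sum>mon\<in>S. \<phi> (Poly_Mapping.lookup p mon) * monev \<sigma> mon)"
  unfolding geval_def by (rule sum.mono_neutral_left) (auto simp: in_keys_iff rhom_zero)

lemma geval_add: "rhom \<phi> \<Longrightarrow> geval \<phi> \<sigma> (p + q) = geval \<phi> \<sigma> p + geval \<phi> \<sigma> q"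
proof -
  assume h: "rhom \<phi>"
  let ?S = "Poly_Mapping.keys p \<union> Poly_Mapping.keys q"
  have k: "Poly_Mapping.keys (p + q) \<subseteq> ?S" by (rule keys_add)
  show ?thesis
    by (simp add: geval_S[OF h _ k] geval_S[OF h, of ?S p] geval_S[OF h, of ?S q]
        lookup_add rhom_add[OF h] distrib_right sum.distrib)
qed

lemma geval_zero[simp]: "geval \<phi> \<sigma> 0 = 0" by (simp add: geval_def)

lemma geval_single: "rhom \<phi> \<Longrightarrow> geval \<phi> \<sigma> (Poly_Mapping.single mon c) = \<phi> c * monev \<sigma> mon"
  by (simp add: geval_def rhom_zero)

lemma geval_uminus: "rhom \<phi> \<Longrightarrow> geval \<phi> \<sigma> (- p) = - geval \<phi> \<sigma> p"
  using geval_add[of \<phi> \<sigma> p "-p"] by (simp add: eq_neg_iff_add_eq_0 add.commute)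
lemma geval_diff: "rhom \<phi> \<Longrightarrow> geval \<phi> \<sigma> (p - q) = geval \<phi> \<sigma> p - geval \<phi> \<sigma> q"
  using geval_add[of \<phi> \<sigma> p "-q"] geval_uminus[of \<phi> \<sigma> q] by simp
lemma geval_sum: "rhom \<phi> \<Longrightarrow> geval \<phi> \<sigma> (\<Sum>i\<in>I. f i) = (\<Sum>i\<in>I. geval \<phi> \<sigma> (f i))"
  by (induction I rule: infinite_finite_induct) (simp_all add: geval_add)

lemma geval_mult: assumes h: "rhom \<phi>" shows "geval \<phi> \<sigma> (p * q) = geval \<phi> \<sigma> p * geval \<phi> \<sigma> q"
proof -
  have "p * q = (\<Sum>a\<in>Poly_Mapping.keys p. Poly_Mapping.single a (Poly_Mapping.lookup p a)) *
                (\<Sum>b\<in>Poly_Mapping.keys q. Poly_Mapping.single b (Poly_Mapping.lookup q b))"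
    by (simp add: poly_sum_singles)
  also have "\<dots> = (\<Sum>a\<in>Poly_Mapping.keys p. \<Sum>b\<in>Poly_Mapping.keys q.
      Poly_Mapping.single (a + b) (Poly_Mapping.lookup p a * Poly_Mapping.lookup q b))"
    by (simp add: sum_distrib_left sum_distrib_right mult_single sum.swap[of _ "Poly_Mapping.keys q"])
  finally have pq: "p * q = \<dots>" .
  have "geval \<phi> \<sigma> (p * q) = (\<Sum>a\<in>Poly_Mapping.keys p. \<Sum>b\<in>Poly_Mapping.keys q.
      (\<phi> (Poly_Mapping.lookup p a) * monev \<sigma> a) * (\<phi> (Poly_Mapping.lookup q b) * monev \<sigma> b))"
    by (simp add: pq geval_sum[OF h] geval_single[OF h] rhom_mult[OF h] monev_add mult_ac)
  also have "\<dots> = geval \<phi> \<sigma> p * geval \<phi> \<sigma> q"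
    by (simp add: geval_def sum_product)
  finally show ?thesis .
qed

lemma geval_Const: "rhom \<phi> \<Longrightarrow> geval \<phi> \<sigma> (Const c) = \<phi> c"
  by (simp add: Const_def geval_single)
lemma geval_Var: "rhom \<phi> \<Longrightarrow> geval \<phi> \<sigma> (Var v) = \<sigma> v"
  by (simp add: Var_def geval_single rhom_one monev_single)
lemma geval_one: "rhom \<phi> \<Longrightarrow> geval \<phi> \<sigma> 1 = 1"
  using geval_Const[of \<phi> \<sigma> 1] by (simp add: rhom_one)
lemma geval_prod: "rhom \<phi> \<Longrightarrow> geval \<phi> \<sigma> (\<Prod>i\<in>I. f i) = (\<Prod>i\<in>I. geval \<phi> \<sigma> (f i))"
  by (induction I rule: infinite_finite_induct) (simp_all add: geval_mult geval_one)
lemma geval_power: "rhom \<phi> \<Longrightarrow> geval \<phi> \<sigma> (p ^ n) = geval \<phi> \<sigma> p ^ n"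
  by (induction n) (simp_all add: geval_mult geval_one)
lemma geval_of_int: "rhom \<phi> \<Longrightarrow> geval \<phi> \<sigma> (of_int k) = of_int k"
  using geval_Const[of \<phi> \<sigma> "of_int k"] by (simp add: Const_of_int rhom_of_int)

lemma geval_subst:
  assumes h: "rhom \<phi>"
  shows "geval \<phi> \<sigma> (subst \<tau> p) = geval \<phi> (\<lambda>v. geval \<phi> \<sigma> (\<tau> v)) p"
  by (simp add: subst_def geval_def[of _ "\<lambda>v. geval \<phi> \<sigma> (\<tau> v)"] monev_def
      geval_sum[OF h] geval_mult[OF h] geval_Const[OF h] geval_prod[OF h] geval_power[OF h])

lemma geval_eqI:
  assumes h: "rhom \<phi>" and hom: "\<And>x y. f (x + y) = f x + f y" "\<And>x y. f (x * y) = f x * f y"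
    and c: "\<And>c. f (Const c) = \<phi> c" and v: "\<And>v. f (Var v) = \<sigma> v"
  shows "f p = geval \<phi> \<sigma> p"
proof -
  have f0: "f 0 = 0" using hom(1)[of 0 0] by simp
  have fs: "f (sum g I) = (\<Sum>i\<in>I. f (g i))" for g and I :: "'x set"
    by (induction I rule: infinite_finite_induct) (simp_all add: f0 hom)
  have f1: "f 1 = 1" using c[of 1] by (simp add: rhom_one[OF h])
  have fp: "f (prod g I) = (\<Prod>i\<in>I. f (g i))" for g and I :: "'x set"
    by (induction I rule: infinite_finite_induct) (simp_all add: f1 hom)
  have fpow: "f (x ^ n) = f x ^ n" for x n
    by (induction n) (simp_all add: f1 hom)
  have "p = (\<Sum>a\<in>Poly_Mapping.keys p. Poly_Mapping.single a (Poly_Mapping.lookup p a))"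
    by (simp add: poly_sum_singles)
  then have "f p = (\<Sum>a\<in>Poly_Mapping.keys p. f (Poly_Mapping.single a (Poly_Mapping.lookup p a)))"
    by (metis fs)
  also have "\<dots> = geval \<phi> \<sigma> p"
    unfolding geval_def monev_def
    by (subst mon_expand) (simp add: hom fp fpow c v)
  finally show ?thesis .
qed

section \<open>Partial derivatives and Der\<close>

lemma pdiff_S: "finite S \<Longrightarrow> Poly_Mapping.keys p \<subseteq> S \<Longrightarrow>
  pdiff v p = (\<Sum>mon\<in>S. Poly_Mapping.single (mon - Poly_Mapping.single v 1)
      (of_nat (Poly_Mapping.lookup mon v) * Poly_Mapping.lookup p mon))"
  unfolding pdiff_def by (rule sum.mono_neutral_left) (auto simp: in_keys_iff)

lemma pdiff_add: "pdiff v (p + q) = pdiff v p + pdiff v q"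
proof -
  let ?S = "Poly_Mapping.keys p \<union> Poly_Mapping.keys q"
  have k: "Poly_Mapping.keys (p + q) \<subseteq> ?S" by (rule keys_add)
  show ?thesis
    by (simp add: pdiff_S[OF _ k] pdiff_S[of ?S p] pdiff_S[of ?S q]
        lookup_add distrib_left single_add sum.distrib)
qed

lemma pdiff_zero[simp]: "pdiff v 0 = 0" by (simp add: pdiff_def)
lemma pdiff_single: "pdiff v (Poly_Mapping.single mon c) =
   Poly_Mapping.single (mon - Poly_Mapping.single v 1) (of_nat (Poly_Mapping.lookup mon v) * c)"
  by (simp add: pdiff_def)
lemma pdiff_uminus: "pdiff v (- p) = - pdiff v p"
  using pdiff_add[of v p "-p"] by (simp add: eq_neg_iff_add_eq_0 add.commute)
lemma pdiff_diff: "pdiff v (p - q) = pdiff v p - pdiff v q"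
  using pdiff_add[of v p "-q"] pdiff_uminus[of v q] by simp
lemma pdiff_sum: "pdiff v (\<Sum>i\<in>I. f i) = (\<Sum>i\<in>I. pdiff v (f i))"
  by (induction I rule: infinite_finite_induct) (simp_all add: pdiff_add)

lemma single_shift:
  "Poly_Mapping.single (a - Poly_Mapping.single v 1 + b)
     (of_nat (Poly_Mapping.lookup a v) * c :: 'r::comm_ring_1)
   = Poly_Mapping.single (a + b - Poly_Mapping.single v 1) (of_nat (Poly_Mapping.lookup a v) * c)"
proof (cases "Poly_Mapping.lookup a v = 0")
  case True then show ?thesis by simp
next
  case False
  have "a - Poly_Mapping.single v 1 + b = a + b - Poly_Mapping.single v 1"
    by (rule poly_mapping_eqI) (use False in \<open>auto simp: lookup_add lookup_minus lookup_single when_def\<close>)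
  then show ?thesis by simp
qed

lemma pdiff_mult_single:
  "pdiff v (Poly_Mapping.single a c * Poly_Mapping.single b d :: ('v,'r::comm_ring_1) mp) =
    pdiff v (Poly_Mapping.single a c) * Poly_Mapping.single b d +
    Poly_Mapping.single a c * pdiff v (Poly_Mapping.single b d)"
proof -
  have 1: "pdiff v (Poly_Mapping.single a c) * Poly_Mapping.single b d =
     Poly_Mapping.single (a + b - Poly_Mapping.single v 1) (of_nat (Poly_Mapping.lookup a v) * (c * d))"
    using single_shift[of a v b "c * d"] by (simp add: pdiff_single mult_single mult.assoc)
  have 2: "Poly_Mapping.single a c * pdiff v (Poly_Mapping.single b d) =
     Poly_Mapping.single (a + b - Poly_Mapping.single v 1) (of_nat (Poly_Mapping.lookup b v) * (c * d))"
    using single_shift[of b v a "c * d"] by (simp add: pdiff_single mult_single mult_ac add.commute)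
  show ?thesis unfolding 1 2
    by (simp add: mult_single pdiff_single lookup_add single_add[symmetric] distrib_right)
qed

lemma pdiff_mult: "pdiff v (p * q) = pdiff v p * q + p * pdiff v (q :: ('v,'r::comm_ring_1) mp)"
proof -
  have "p * q = (\<Sum>a\<in>Poly_Mapping.keys p. \<Sum>b\<in>Poly_Mapping.keys q.
      Poly_Mapping.single a (Poly_Mapping.lookup p a) * Poly_Mapping.single b (Poly_Mapping.lookup q b))"
    by (subst (1 2) poly_sum_singles[symmetric]) (simp add: sum_distrib_left sum_distrib_right
        sum.swap[of _ "Poly_Mapping.keys q"])
  then have "pdiff v (p * q) = (\<Sum>a\<in>Poly_Mapping.keys p. \<Sum>b\<in>Poly_Mapping.keys q.
      pdiff v (Poly_Mapping.single a (Poly_Mapping.lookup p a)) * Poly_Mapping.single b (Poly_Mapping.lookup q b) +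
      Poly_Mapping.single a (Poly_Mapping.lookup p a) * pdiff v (Poly_Mapping.single b (Poly_Mapping.lookup q b)))"
    by (simp add: pdiff_sum pdiff_mult_single)
  also have "\<dots> = pdiff v (\<Sum>a\<in>Poly_Mapping.keys p. Poly_Mapping.single a (Poly_Mapping.lookup p a)) *
        (\<Sum>b\<in>Poly_Mapping.keys q. Poly_Mapping.single b (Poly_Mapping.lookup q b)) +
      (\<Sum>a\<in>Poly_Mapping.keys p. Poly_Mapping.single a (Poly_Mapping.lookup p a)) *
        pdiff v (\<Sum>b\<in>Poly_Mapping.keys q. Poly_Mapping.single b (Poly_Mapping.lookup q b))"
    by (simp add: pdiff_sum sum.distrib sum_distrib_left sum_distrib_right sum.swap[of _ "Poly_Mapping.keys q"])
  finally show ?thesis by (simp add: poly_sum_singles)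
qed

lemma finite_pvars[simp]: "finite (pvars p)" by (simp add: pvars_def)

lemma pdiff_notin: "v \<notin> pvars p \<Longrightarrow> pdiff v p = 0"
  unfolding pdiff_def pvars_def by (rule sum.neutral) (auto simp: in_keys_iff)

lemma pvars_add: "pvars (p + q) \<subseteq> pvars p \<union> pvars q"
  unfolding pvars_def using keys_add[of p q] by auto
lemma pvars_mult: "pvars (p * q) \<subseteq> pvars p \<union> pvars (q :: ('v,'r::comm_ring_1) mp)"
  unfolding pvars_def using keys_mult[of p q] by (force simp: keys_add_nat)

lemma Der_S: "finite V \<Longrightarrow> pvars p \<subseteq> V \<Longrightarrow>
   Der p = (\<Sum>v\<in>V. Emb (pdiff v p) * Var (Inr v))"
  unfolding Der_def by (rule sum.mono_neutral_left) (auto simp: pdiff_notin subst_geval Emb_def)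

lemma Emb_hom:
  "Emb (p + q) = Emb p + Emb q" "Emb (p * q) = Emb p * Emb q" "Emb (p - q) = Emb p - Emb q"
  "Emb (- p) = - Emb p" "Emb (Const c) = Const c" "Emb (Var v) = Var (Inl v)" "Emb 0 = 0" "Emb 1 = 1"
  "Emb (sum f I) = (\<Sum>i\<in>I. Emb (f i))"
  by (simp_all add: Emb_def subst_geval geval_add geval_mult geval_diff geval_uminus geval_Const
      geval_Var geval_one geval_sum rhom_Const)

lemma Der_add: "Der (p + q) = Der p + Der q"
proof -
  let ?V = "pvars p \<union> pvars q"
  show ?thesis
    by (simp add: Der_S[of ?V "p+q"] Der_S[of ?V p] Der_S[of ?V q] pvars_add pdiff_add Emb_hom
        distrib_right sum.distrib)
qed

lemma Der_mult: "Der (p * q) = Emb p * Der q + Der p * Emb (q :: ('v,'r::comm_ring_1) mp)"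
proof -
  let ?V = "pvars p \<union> pvars q"
  show ?thesis
    by (simp add: Der_S[of ?V "p*q"] Der_S[of ?V p] Der_S[of ?V q] pvars_mult pdiff_mult Emb_hom
        sum_distrib_left sum.distrib[symmetric] algebra_simps)
qed

lemma Der_zero[simp]: "Der 0 = 0" by (simp add: Der_def pvars_def)
lemma Der_uminus: "Der (- p) = - Der p"
  using Der_add[of p "-p"] by (simp add: eq_neg_iff_add_eq_0 add.commute)
lemma Der_diff: "Der (p - q) = Der p - Der q"
  using Der_add[of p "-q"] Der_uminus[of q] by simp
lemma Der_sum: "Der (\<Sum>i\<in>I. f i) = (\<Sum>i\<in>I. Der (f i))"
  by (induction I rule: infinite_finite_induct) (simp_all add: Der_add)
lemma Der_Const: "Der (Const c) = 0"
  by (simp add: Der_def pvars_def Const_def)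
lemma Der_one: "Der 1 = 0" using Der_Const[of 1] by simp
lemma Der_Var: "Der (Var v :: ('v,'r::comm_ring_1) mp) = Var (Inr v)"
proof -
  have "Der (Var v :: ('v,'r) mp) = Emb (pdiff v (Var v)) * Var (Inr v)"
    by (simp add: Der_S[of "{v}"] pvars_def Var_def)
  also have "pdiff v (Var v :: ('v,'r) mp) = 1"
    by (simp add: Var_def pdiff_single)
  finally show ?thesis by (simp add: Emb_hom)
qed

lemmas gev = geval_add geval_mult geval_diff geval_uminus geval_Const geval_Var geval_sum
  geval_zero geval_one rhom_Const

lemma subst_simps:
  "subst \<sigma> (p + q) = subst \<sigma> p + subst \<sigma> q" "subst \<sigma> (p * q) = subst \<sigma> p * subst \<sigma> q"
  "subst \<sigma> (p - q) = subst \<sigma> p - subst \<sigma> q" "subst \<sigma> (- p) = - subst \<sigma> p"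
  "subst \<sigma> (Const c) = Const c" "subst \<sigma> (Var v) = \<sigma> v" "subst \<sigma> 0 = 0" "subst \<sigma> 1 = 1"
  "subst \<sigma> (sum f I) = (\<Sum>i\<in>I. subst \<sigma> (f i))"
  by (simp_all add: subst_geval gev)

lemma Der_simps: "Der (p + q) = Der p + Der q" "Der (p * q) = Emb p * Der q + Der p * Emb q"
  "Der (p - q) = Der p - Der q" "Der (- p) = - Der p" "Der (Const c) = 0" "Der (Var v) = Var (Inr v)"
  "Der 0 = 0" "Der 1 = 0" "Der (sum f I) = (\<Sum>i\<in>I. Der (f i))"
  by (simp_all add: Der_add Der_mult Der_diff Der_uminus Der_Const Der_Var Der_one Der_sum)

lemmas Tsimps = subst_simps Der_simps Emb_hom Tmap_def cmap_def Kmap_def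

lemma CK_A_eq: "CK_A nabla a = (Var (Inl (Inl (Inl a))) :: _ \<Rightarrow>\<^sub>0 'r::comm_ring_1)"
  by (simp add: CK_A_def Tsimps)

context
  fixes nabla :: "'m \<Rightarrow> ('a \<times> 'm) \<Rightarrow>\<^sub>0 int"
begin

abbreviation (input) cf where "cf m x \<equiv> Poly_Mapping.lookup (nabla m) x"

lemma CK_M_eq: "(CK_M nabla m :: _ \<Rightarrow>\<^sub>0 'r::comm_ring_1) =
   (\<Sum>x\<in>Poly_Mapping.keys (nabla m). \<Sum>y\<in>Poly_Mapping.keys (nabla (snd x)).
      Const (of_int (cf m x * cf (snd x) y)) * Var (Inl (Inl (Inr (snd y)))) *
      (Var (Inl (Inr (Inl (fst x)))) * Var (Inr (Inl (Inl (fst y)))) -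
       Var (Inl (Inr (Inl (fst y)))) * Var (Inr (Inl (Inl (fst x))))))"
proof -
  define C where "C m x = (Const (of_int (cf m x)) :: ((('a + 'm) + ('a + 'm)) + (('a + 'm) + ('a + 'm)), 'r) mp)" for m x
  define S where "S x = (\<Sum>y\<in>Poly_Mapping.keys (nabla (snd x)). C (snd x) y * Var (Inl (Inl (Inr (snd y)))) * Var (Inl (Inr (Inl (fst y)))))" for x :: "'a \<times> 'm"
  define S' where "S' x = (\<Sum>y\<in>Poly_Mapping.keys (nabla (snd x)). C (snd x) y * Var (Inl (Inl (Inr (snd y)))) * Var (Inr (Inl (Inl (fst y)))))" for x :: "'a \<times> 'm"
  let ?K = "Poly_Mapping.keys (nabla m)"
  have X: "Tmap (Kgen nabla) (Kmap nabla (Var (Inr m))) =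
      Var (Inr (Inr (Inr m))) -
      (\<Sum>x\<in>?K. C m x * (Var (Inl (Inl (Inr (snd x)))) * Var (Inr (Inr (Inl (fst x)))) +
                         Var (Inr (Inl (Inr (snd x)))) * Var (Inl (Inr (Inl (fst x)))))) -
      (\<Sum>x\<in>?K. C m x * (Var (Inl (Inr (Inr (snd x)))) - S x) * Var (Inr (Inl (Inl (fst x)))))"
    by (simp add: Tsimps C_def S_def mult_ac distrib_left)
  have cX: "cmap (Tmap (Kgen nabla) (Kmap nabla (Var (Inr m)))) =
      Var (Inr (Inr (Inr m))) -
      (\<Sum>x\<in>?K. C m x * (Var (Inl (Inl (Inr (snd x)))) * Var (Inr (Inr (Inl (fst x)))) +
                         Var (Inl (Inr (Inr (snd x)))) * Var (Inr (Inl (Inl (fst x)))))) -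
      (\<Sum>x\<in>?K. C m x * (Var (Inr (Inl (Inr (snd x)))) - S' x) * Var (Inl (Inr (Inl (fst x)))))"
    unfolding X by (simp add: cmap_def subst_simps C_def S_def S'_def mult_ac)
  have "CK_M nabla m = (\<Sum>x\<in>?K. C m x * (S' x * Var (Inl (Inr (Inl (fst x)))) - S x * Var (Inr (Inl (Inl (fst x))))))"
    unfolding CK_M_def
    apply (subst cX)
    apply (subst X)
    by (simp add: sum_subtractf[symmetric] sum.distrib[symmetric] algebra_simps)
  also have "\<dots> = (\<Sum>x\<in>Poly_Mapping.keys (nabla m). \<Sum>y\<in>Poly_Mapping.keys (nabla (snd x)).
      Const (of_int (cf m x * cf (snd x) y)) * Var (Inl (Inl (Inr (snd y)))) *
      (Var (Inl (Inr (Inl (fst x)))) * Var (Inr (Inl (Inl (fst y)))) -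
       Var (Inl (Inr (Inl (fst y)))) * Var (Inr (Inl (Inl (fst x))))))"
    by (simp add: S_def S'_def C_def sum_distrib_left sum_distrib_right sum_subtractf[symmetric]
        Const_mult algebra_simps)
  finally show ?thesis .
qed

end

lemma frag_cmul_of: "frag_cmul c (frag_of y) = Poly_Mapping.single y c"
  by (rule poly_mapping_eqI) (simp add: lookup_single when_def)

lemma OM2_scale_ext: "OM2_scale smult h =
   frag_extend (\<lambda>k. frag_of (fst k, fst (snd k), smult h (snd (snd k))))"
  by (rule ext) (simp add: OM2_scale_def frag_extend_def frag_cmul_of)

lemma gs_cmul: "x \<in> gen_subgroup G \<Longrightarrow> frag_cmul k x \<in> gen_subgroup G"
  by (rule frag_closure_minus_cmul) (auto intro: gs_diff gs_zero)

locale ctx = module smult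
  for \<iota> :: "'r::comm_ring_1 \<Rightarrow> 'a::comm_ring_1" and smult :: "'a \<Rightarrow> 'm::ab_group_add \<Rightarrow> 'm" +
  assumes hom_add: "\<And>x y. \<iota> (x + y) = \<iota> x + \<iota> y"
    and hom_mult: "\<And>x y. \<iota> (x * y) = \<iota> x * \<iota> y"
    and hom_one: "\<iota> 1 = 1"
begin

lemma rhom_iota: "rhom \<iota>" by (simp add: rhom_def hom_add hom_mult hom_one)
lemma iota_of_int: "\<iota> (of_int k) = of_int k" by (rule rhom_of_int[OF rhom_iota])
lemma iota_zero: "\<iota> 0 = 0" by (rule rhom_zero[OF rhom_iota])

abbreviation eq2 where "eq2 \<equiv> OM2_eq \<iota> smult"
abbreviation G2 where "G2 \<equiv> gen_subgroup (OM2_rels \<iota> smult)"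
abbreviation S where "S a b m \<equiv> (frag_of (a, b, m) :: ('a \<times> 'a \<times> 'm) \<Rightarrow>\<^sub>0 int)"

lemma eq2_refl: "eq2 x x" by (simp add: OM2_eq_def gs_zero)
lemma eq2_sym: "eq2 x y \<Longrightarrow> eq2 y x"
  unfolding OM2_eq_def using gs_uminus[of "x - y"] by simp
lemma eq2_trans: "eq2 x y \<Longrightarrow> eq2 y z \<Longrightarrow> eq2 x z"
proof -
  assume "eq2 x y" "eq2 y z"
  then have "(x - y) + (y - z) \<in> G2" unfolding OM2_eq_def by (rule gs_add)
  then show ?thesis unfolding OM2_eq_def by simp
qed
lemmas eq2_trans' [trans] = eq2_trans

lemma eq2_add: "eq2 a b \<Longrightarrow> eq2 c d \<Longrightarrow> eq2 (a + c) (b + d)"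
proof -
  assume "eq2 a b" "eq2 c d"
  then have "(a - b) + (c - d) \<in> G2" unfolding OM2_eq_def by (rule gs_add)
  moreover have "(a - b) + (c - d) = (a + c) - (b + d)" by simp
  ultimately show ?thesis unfolding OM2_eq_def by simp
qed
lemma eq2_diff: "eq2 a b \<Longrightarrow> eq2 c d \<Longrightarrow> eq2 (a - c) (b - d)"
proof -
  assume "eq2 a b" "eq2 c d"
  then have "(a - b) - (c - d) \<in> G2" unfolding OM2_eq_def by (rule gs_diff)
  moreover have "(a - b) - (c - d) = (a - c) - (b - d)" by simp
  ultimately show ?thesis unfolding OM2_eq_def by simp
qed
lemma eq2_uminus: "eq2 a b \<Longrightarrow> eq2 (- a) (- b)"
  using eq2_diff[OF eq2_refl[of 0]] by simp
lemma eq2_sum: "(\<And>i. i \<in> I \<Longrightarrow> eq2 (f i) (g i)) \<Longrightarrow> eq2 (sum f I) (sum g I)"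
  unfolding OM2_eq_def by (simp add: sum_subtractf[symmetric] gs_sum)
lemma eq2_cmul: "eq2 a b \<Longrightarrow> eq2 (frag_cmul k a) (frag_cmul k b)"
proof -
  have "frag_cmul k a - frag_cmul k b = frag_cmul k (a - b)"
    by (rule poly_mapping_eqI) (simp add: lookup_minus algebra_simps)
  then show "eq2 a b \<Longrightarrow> eq2 (frag_cmul k a) (frag_cmul k b)"
    unfolding OM2_eq_def using gs_cmul[of "a - b" _ k] by simp
qed
lemma eq2_base: "g \<in> OM2_rels \<iota> smult \<Longrightarrow> eq2 g 0"
  by (simp add: OM2_eq_def gs_base)

lemma R_m_add: "eq2 (S a b (m + n)) (S a b m + S a b n)"
proof -
  have "S a b (m + n) - S a b m - S a b n \<in> OM2_rels \<iota> smult" unfolding OM2_rels_def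
    apply (rule UnI1, rule UnI1, rule UnI1, rule UnI1, rule UnI1, rule UnI2)
    by blast
  then show ?thesis unfolding OM2_eq_def by (metis gs_base diff_diff_eq)
qed
lemma R_a_add: "eq2 (S (a + a') b m) (S a b m + S a' b m)"
proof -
  have "S (a + a') b m - S a b m - S a' b m \<in> OM2_rels \<iota> smult" unfolding OM2_rels_def
    apply (rule UnI1, rule UnI1, rule UnI1, rule UnI1, rule UnI1, rule UnI1, rule UnI1)
    by blast
  then show ?thesis unfolding OM2_eq_def by (metis gs_base diff_diff_eq)
qed
lemma R_b_add: "eq2 (S a (b + b') m) (S a b m + S a b' m)"
proof -
  have "S a (b + b') m - S a b m - S a b' m \<in> OM2_rels \<iota> smult" unfolding OM2_rels_def
    apply (rule UnI1, rule UnI1, rule UnI1, rule UnI1, rule UnI1, rule UnI1, rule UnI2)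
    by blast
  then show ?thesis unfolding OM2_eq_def by (metis gs_base diff_diff_eq)
qed
lemma R_leib1: "eq2 (S (a * c) b m) (S a b (smult c m) + S c b (smult a m))"
proof -
  have "S (a * c) b m - S a b (smult c m) - S c b (smult a m) \<in> OM2_rels \<iota> smult" unfolding OM2_rels_def
    apply (rule UnI1, rule UnI1, rule UnI1, rule UnI1, rule UnI2)
    by blast
  then show ?thesis unfolding OM2_eq_def by (metis gs_base diff_diff_eq)
qed
lemma R_leib2: "eq2 (S a (b * c) m) (S a b (smult c m) + S a c (smult b m))"
proof -
  have "S a (b * c) m - S a b (smult c m) - S a c (smult b m) \<in> OM2_rels \<iota> smult" unfolding OM2_rels_def
    apply (rule UnI1, rule UnI1, rule UnI1, rule UnI2)
    by blast
  then show ?thesis unfolding OM2_eq_def by (metis gs_base diff_diff_eq)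
qed
lemma R_iota1: "eq2 (S (\<iota> r) b m) 0"
  by (rule eq2_base) (unfold OM2_rels_def, rule UnI1, rule UnI1, rule UnI2, blast)
lemma R_iota2: "eq2 (S a (\<iota> r) m) 0"
  by (rule eq2_base) (unfold OM2_rels_def, rule UnI1, rule UnI2, blast)
lemma R_alt: "eq2 (S a a m) 0"
  by (rule eq2_base) (unfold OM2_rels_def, rule UnI2, blast)

lemma R_m0: "eq2 (S a b 0) 0"
proof -
  have "eq2 (S a b 0) (S a b 0 + S a b 0)" using R_m_add[of a b 0 0] by simp
  then have "eq2 (S a b 0 - S a b 0) (S a b 0 + S a b 0 - S a b 0)" by (rule eq2_diff) (rule eq2_refl)
  then show ?thesis by (simp add: eq2_sym)
qed

lemma R_anti: "eq2 (S a b m + S b a m) 0"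
proof -
  have "eq2 (S (a + b) (a + b) m) (S a (a + b) m + S b (a + b) m)" by (rule R_a_add)
  also have "eq2 \<dots> ((S a a m + S a b m) + (S b a m + S b b m))"
    by (intro eq2_add R_b_add)
  also have "eq2 \<dots> ((0 + S a b m) + (S b a m + 0))"
    by (intro eq2_add R_alt eq2_refl)
  finally have "eq2 (S (a + b) (a + b) m) (S a b m + S b a m)" by simp
  then show ?thesis using R_alt eq2_sym eq2_trans by blast
qed


lemma R_int: "eq2 (S a b (smult (of_int k) m)) (frag_cmul k (S a b m))"
proof (induction k rule: int_induct[where k=0])
  case base then show ?case by (simp add: R_m0)
next
  case (step1 i)
  have "eq2 (S a b (smult (of_int (i + 1)) m)) (S a b (smult (of_int i) m) + S a b m)"
    using R_m_add[of a b "smult (of_int i) m" m] by (simp add: scale_left_distrib)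
  also have "eq2 \<dots> (frag_cmul i (S a b m) + S a b m)" by (intro eq2_add step1 eq2_refl)
  finally show ?case by (simp add: frag_cmul_distrib)
next
  case (step2 i)
  have "eq2 (S a b (smult (of_int i) m)) (S a b (smult (of_int (i - 1)) m) + S a b m)"
  proof -
    have e: "smult (of_int i) m = smult (of_int (i - 1)) m + m"
      by (metis scale_left_distrib scale_one diff_add_cancel of_int_diff of_int_1)
    show ?thesis unfolding e by (rule R_m_add)
  qed
  then have "eq2 (S a b (smult (of_int i) m) - S a b m) (S a b (smult (of_int (i - 1)) m))"
    using eq2_diff[OF _ eq2_refl[of "S a b m"]] by fastforce
  then have "eq2 (S a b (smult (of_int (i - 1)) m)) (S a b (smult (of_int i) m) - S a b m)"
    by (rule eq2_sym)
  also have "eq2 \<dots> (frag_cmul i (S a b m) - S a b m)" by (intro eq2_diff step2 eq2_refl)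
  finally show ?case by (simp add: frag_cmul_diff_distrib)
qed

end

lemma mon3_lookup:
  "Poly_Mapping.lookup (mon3 m a b) (Inl (Inl (Inr m'))) = (if m = m' then 1 else 0)"
  "Poly_Mapping.lookup (mon3 m a b) (Inl (Inr (Inl a'))) = (if a = a' then 1 else 0)"
  "Poly_Mapping.lookup (mon3 m a b) (Inr (Inl (Inl b'))) = (if b = b' then 1 else 0)"
  by (simp_all add: mon3_def lookup_add lookup_single when_def)

lemma mon3_inj: assumes e: "mon3 m a b = mon3 m' a' b'" shows "m = m' \<and> a = a' \<and> b = b'"
proof -
  have 1: "Poly_Mapping.lookup (mon3 m a b) (Inl (Inl (Inr m))) = 1" 
    "Poly_Mapping.lookup (mon3 m a b) (Inl (Inr (Inl a))) = 1" 
    "Poly_Mapping.lookup (mon3 m a b) (Inr (Inl (Inl b))) = 1" by (simp_all only: mon3_lookup if_True refl)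
  have "m' = m" using 1(1) unfolding e mon3_lookup by (cases "m' = m") simp_all
  moreover have "a' = a" using 1(2) unfolding e mon3_lookup by (cases "a' = a") simp_all
  moreover have "b' = b" using 1(3) unfolding e mon3_lookup by (cases "b' = b") simp_all
  ultimately show ?thesis by simp
qed

lemma mon3_poly: "(Const r * Var (Inl (Inl (Inr m))) * (Var (Inl (Inr (Inl a))) * Var (Inr (Inl (Inl b))))
   :: _ \<Rightarrow>\<^sub>0 'r::comm_ring_1) = Poly_Mapping.single (mon3 m a b) r"
  by (simp add: Const_def Var_def mult_single mon3_def add.assoc)

lemma frag_cmul_diff2: "frag_cmul k (a - b) = frag_cmul k a - frag_cmul k b"
  by (rule poly_mapping_eqI) (simp add: lookup_minus algebra_simps)

lemma mon3_poly': "(Const r * (Var (Inl (Inl (Inr m))) * (Var (Inl (Inr (Inl a))) * Var (Inr (Inl (Inl b)))))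
   :: _ \<Rightarrow>\<^sub>0 'r::comm_ring_1) = Poly_Mapping.single (mon3 m a b) r"
  by (simp add: Const_def Var_def mult_single mon3_def add.assoc)

definition Zc :: "('m \<Rightarrow> ('a \<times> 'm) \<Rightarrow>\<^sub>0 int) \<Rightarrow> 'm \<Rightarrow> ('a \<times> 'a \<times> 'm) \<Rightarrow>\<^sub>0 int" where
  "Zc nabla m = (\<Sum>x\<in>Poly_Mapping.keys (nabla m). \<Sum>y\<in>Poly_Mapping.keys (nabla (snd x)).
     frag_cmul (Poly_Mapping.lookup (nabla m) x * Poly_Mapping.lookup (nabla (snd x)) y)
       (frag_of (fst x, fst y, snd y) - frag_of (fst y, fst x, snd y)))"

context ctx
begin

lemma phi_mon_mon3: "phi_mon \<iota> smult r (mon3 m a b) = S a b (smult (\<iota> r) m)"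
proof -
  have "(THE (m', a', b'). mon3 m a b = mon3 m' a' b') = (m, a, b)"
  proof (rule the_equality)
    show "case (m, a, b) of (m', a', b') \<Rightarrow> mon3 m a b = mon3 m' a' b'" by simp
  next
    fix x assume h: "case x of (m', a', b') \<Rightarrow> mon3 m a b = mon3 m' a' b'"
    obtain m' a' b' where x: "x = (m', a', b')" by (cases x) blast
    from h have "mon3 m a b = mon3 m' a' b'" by (simp add: x)
    from mon3_inj[OF this] show "x = (m, a, b)" unfolding x by (intro prod_eqI) simp_all
  qed
  then show ?thesis by (auto simp: phi_mon_def)
qed

lemma phi_mon_other: "\<not> (\<exists>m a b. mon = mon3 m a b) \<Longrightarrow> phi_mon \<iota> smult r mon = 0"
  by (simp add: phi_mon_def)

lemma phi_mon_add: "eq2 (phi_mon \<iota> smult (r + s) mon) (phi_mon \<iota> smult r mon + phi_mon \<iota> smult s mon)"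
proof (cases "\<exists>m a b. mon = mon3 m a b")
  case True
  then obtain m a b where mon: "mon = mon3 m a b" by blast
  show ?thesis unfolding mon phi_mon_mon3 hom_add scale_left_distrib by (rule R_m_add)
next
  case False then show ?thesis by (simp add: phi_mon_other eq2_refl)
qed

lemma phi_mon_zero: "eq2 (phi_mon \<iota> smult 0 mon) 0"
proof (cases "\<exists>m a b. mon = mon3 m a b")
  case True
  then obtain m a b where mon: "mon = mon3 m a b" by blast
  show ?thesis unfolding mon phi_mon_mon3 iota_zero scale_zero_left by (rule R_m0)
next
  case False then show ?thesis by (simp add: phi_mon_other eq2_refl)
qed

lemma phi_S:
  assumes "finite A" "Poly_Mapping.keys p \<subseteq> A"
  shows "eq2 (phi \<iota> smult p) (\<Sum>mon\<in>A. phi_mon \<iota> smult (Poly_Mapping.lookup p mon) mon)"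
proof -
  have "(\<Sum>mon\<in>A. phi_mon \<iota> smult (Poly_Mapping.lookup p mon) mon) =
     phi \<iota> smult p + (\<Sum>mon\<in>A - Poly_Mapping.keys p. phi_mon \<iota> smult (Poly_Mapping.lookup p mon) mon)"
    unfolding phi_def using sum.subset_diff[OF assms(2) assms(1)] by (simp add: add.commute)
  moreover have "eq2 (\<Sum>mon\<in>A - Poly_Mapping.keys p. phi_mon \<iota> smult (Poly_Mapping.lookup p mon) mon) (\<Sum>mon\<in>A - Poly_Mapping.keys p. 0)"
    by (rule eq2_sum) (simp add: in_keys_iff phi_mon_zero)
  ultimately show ?thesis using eq2_add[OF eq2_refl[of "phi \<iota> smult p"]] eq2_sym by fastforce
qed

lemma phi_zero[simp]: "phi \<iota> smult 0 = 0" by (simp add: phi_def)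

lemma phi_add: "eq2 (phi \<iota> smult (p + q)) (phi \<iota> smult p + phi \<iota> smult q)"
proof -
  let ?A = "Poly_Mapping.keys p \<union> Poly_Mapping.keys q"
  have "eq2 (phi \<iota> smult (p + q)) (\<Sum>mon\<in>?A. phi_mon \<iota> smult (Poly_Mapping.lookup (p + q) mon) mon)"
  proof (rule phi_S)
    show "Poly_Mapping.keys (p + q) \<subseteq> ?A" by (rule keys_add)
  qed simp
  also have "eq2 \<dots> (\<Sum>mon\<in>?A. phi_mon \<iota> smult (Poly_Mapping.lookup p mon) mon + phi_mon \<iota> smult (Poly_Mapping.lookup q mon) mon)"
    by (rule eq2_sum) (simp add: lookup_add phi_mon_add)
  also have "\<dots> = (\<Sum>mon\<in>?A. phi_mon \<iota> smult (Poly_Mapping.lookup p mon) mon) + (\<Sum>mon\<in>?A. phi_mon \<iota> smult (Poly_Mapping.lookup q mon) mon)"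
    by (rule sum.distrib)
  also have "eq2 \<dots> (phi \<iota> smult p + phi \<iota> smult q)"
    by (intro eq2_add eq2_sym[OF phi_S]) auto
  finally show ?thesis .
qed

lemma phi_uminus: "eq2 (phi \<iota> smult (- p)) (- phi \<iota> smult p)"
proof -
  have "eq2 0 (phi \<iota> smult p + phi \<iota> smult (- p))" using phi_add[of p "-p"] by simp
  then have "eq2 (0 - phi \<iota> smult p) (phi \<iota> smult p + phi \<iota> smult (- p) - phi \<iota> smult p)"
    by (rule eq2_diff) (rule eq2_refl)
  then show ?thesis by (simp add: eq2_sym)
qed

lemma phi_diff: "eq2 (phi \<iota> smult (p - q)) (phi \<iota> smult p - phi \<iota> smult q)"
  using eq2_trans[OF phi_add[of p "-q"] eq2_add[OF eq2_refl phi_uminus[of q]]] by simp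

lemma phi_sum: "eq2 (phi \<iota> smult (\<Sum>i\<in>I. f i)) (\<Sum>i\<in>I. phi \<iota> smult (f i))"
proof (induction I rule: infinite_finite_induct)
  case (insert x F)
  then show ?case using eq2_trans[OF phi_add eq2_add[OF eq2_refl insert.IH]] by simp
qed (simp_all add: eq2_refl)

lemma phi_single: "eq2 (phi \<iota> smult (Poly_Mapping.single mon r)) (phi_mon \<iota> smult r mon)"
  using phi_S[of "{mon}" "Poly_Mapping.single mon r"] by simp

lemma S_of_int: "eq2 (S a b (smult (\<iota> (of_int k)) m)) (frag_cmul k (S a b m))"
  unfolding iota_of_int by (rule R_int)

lemma phi_CK: "eq2 (phi \<iota> smult (CK_M nabla m :: _ \<Rightarrow>\<^sub>0 'r)) (Zc nabla m)"
proof -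
  have "eq2 (phi \<iota> smult (CK_M nabla m :: _ \<Rightarrow>\<^sub>0 'r)) (Zc nabla m)"
    unfolding CK_M_eq Zc_def
    apply (rule eq2_trans[OF phi_sum])
    apply (rule eq2_sum)
    apply (rule eq2_trans[OF phi_sum])
    apply (rule eq2_sum)
    apply (simp only: right_diff_distrib mult.assoc[symmetric])
    apply (rule eq2_trans[OF phi_diff])
    apply (simp only: mult.assoc mon3_poly')
    apply (simp only: frag_cmul_diff2)
    apply (rule eq2_diff)
     apply (rule eq2_trans[OF phi_single], simp only: phi_mon_mon3, rule S_of_int)+
    done
  then show ?thesis .
qed

end

context ctx
begin

lemma eq2_zero_iff: "eq2 x 0 \<longleftrightarrow> x \<in> G2" by (simp add: OM2_eq_def)

lemma scale_S: "OM2_scale smult h (S a b m) = S a b (smult h m)"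
  by (simp add: OM2_scale_ext)

lemma scale_rel: "g \<in> OM2_rels \<iota> smult \<Longrightarrow> OM2_scale smult h g \<in> G2"
proof -
  assume "g \<in> OM2_rels \<iota> smult"
  then consider
      (1) a a' b m where "g = S (a + a') b m - S a b m - S a' b m"
    | (2) a b b' m where "g = S a (b + b') m - S a b m - S a b' m"
    | (3) a b m n where "g = S a b (m + n) - S a b m - S a b n"
    | (4) a b c m where "g = S (a * c) b m - S a b (smult c m) - S c b (smult a m)"
    | (5) a b c m where "g = S a (b * c) m - S a b (smult c m) - S a c (smult b m)"
    | (6) r b m where "g = S (\<iota> r) b m"
    | (7) a r m where "g = S a (\<iota> r) m"
    | (8) a m where "g = S a a m"
    using \<open>g \<in> OM2_rels \<iota> smult\<close> unfolding OM2_rels_def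
    apply -
    apply (elim UnE CollectE exE conjE)
    by blast+
  then show ?thesis
  proof cases
    case 1 then show ?thesis using R_a_add[of a a' b "smult h m"]
      by (simp add: OM2_scale_ext frag_extend_diff frag_extend_add OM2_eq_def diff_diff_eq)
  next
    case 2 then show ?thesis using R_b_add[of a b b' "smult h m"]
      by (simp add: OM2_scale_ext frag_extend_diff frag_extend_add OM2_eq_def diff_diff_eq)
  next
    case 3 then show ?thesis using R_m_add[of a b "smult h m" "smult h n"]
      by (simp add: OM2_scale_ext frag_extend_diff frag_extend_add OM2_eq_def diff_diff_eq scale_right_distrib)
  next
    case 4 then show ?thesis using R_leib1[of a c b "smult h m"]
      by (simp add: OM2_scale_ext frag_extend_diff frag_extend_add OM2_eq_def diff_diff_eq mult.commute)
  next
    case 5 then show ?thesis using R_leib2[of a b c "smult h m"]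
      by (simp add: OM2_scale_ext frag_extend_diff frag_extend_add OM2_eq_def diff_diff_eq mult.commute)
  next
    case 6 then show ?thesis using R_iota1[of r b "smult h m"]
      by (simp add: OM2_scale_ext OM2_eq_def)
  next
    case 7 then show ?thesis using R_iota2[of a r "smult h m"]
      by (simp add: OM2_scale_ext OM2_eq_def)
  next
    case 8 then show ?thesis using R_alt[of a "smult h m"]
      by (simp add: OM2_scale_ext OM2_eq_def)
  qed
qed

lemma scale_eq2: "eq2 x y \<Longrightarrow> eq2 (OM2_scale smult h x) (OM2_scale smult h y)"
proof -
  assume "eq2 x y"
  then have "x - y \<in> G2" by (simp add: OM2_eq_def)
  have "OM2_scale smult h (x - y) \<in> G2"
  proof (rule gs_hom[where f="OM2_scale smult h", OF _ _ \<open>x - y \<in> G2\<close>])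
    show "OM2_scale smult h (x + y) = OM2_scale smult h x + OM2_scale smult h y" for x y
      by (simp add: OM2_scale_ext frag_extend_add)
  qed (rule scale_rel)
  then show ?thesis by (simp add: OM2_eq_def OM2_scale_ext frag_extend_diff)
qed

lemma half_term:
  assumes h: "2 * h = 1"
  shows "eq2 (S a b m) (S a b (smult h m) - S b a (smult h m))"
proof -
  let ?n = "smult h m"
  have "eq2 (S b a ?n) (- S a b ?n)"
    using eq2_diff[OF R_anti[of a b ?n] eq2_refl[of "S a b ?n"]] by simp
  then have "eq2 (S a b ?n - S b a ?n) (S a b ?n - - S a b ?n)"
    by (rule eq2_diff[OF eq2_refl])
  also have "S a b ?n - - S a b ?n = S a b ?n + S a b ?n" by simp
  also have "eq2 \<dots> (S a b (?n + ?n))" by (rule eq2_sym[OF R_m_add])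
  also have "?n + ?n = m" using h by (simp add: scale_left_distrib[symmetric] mult_2[symmetric])
  finally show ?thesis by (rule eq2_sym)
qed

lemma curv_Zc:
  assumes h: "2 * h = 1"
  shows "eq2 (curvature nabla m) (OM2_scale smult h (Zc nabla m))"
proof -
  have "curvature nabla m = (\<Sum>x\<in>Poly_Mapping.keys (nabla m). \<Sum>y\<in>Poly_Mapping.keys (nabla (snd x)).
     frag_cmul (Poly_Mapping.lookup (nabla m) x * Poly_Mapping.lookup (nabla (snd x)) y) (S (fst x) (fst y) (snd y)))"
    by (simp add: curvature_def frag_cmul_of)
  moreover have "OM2_scale smult h (Zc nabla m) = (\<Sum>x\<in>Poly_Mapping.keys (nabla m). \<Sum>y\<in>Poly_Mapping.keys (nabla (snd x)).
     frag_cmul (Poly_Mapping.lookup (nabla m) x * Poly_Mapping.lookup (nabla (snd x)) y)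
       (S (fst x) (fst y) (smult h (snd y)) - S (fst y) (fst x) (smult h (snd y))))"
    by (simp add: Zc_def OM2_scale_ext frag_extend_sum frag_extend_cmul frag_extend_diff o_def)
  ultimately show ?thesis
    by (simp only:) (intro eq2_sum eq2_cmul half_term[OF h])
qed

theorem part1:
  assumes h: "2 * h = 1"
  shows "eq2 (curvature nabla m) (OM2_scale smult h (phi \<iota> smult (CK_M nabla m :: _ \<Rightarrow>\<^sub>0 'r)))"
  using eq2_trans[OF curv_Zc[OF h] scale_eq2[OF eq2_sym[OF phi_CK]]] .

end

definition psi0 :: "'a \<times> 'a \<times> 'm \<Rightarrow> ((('a + 'm) + ('a + 'm)) + (('a + 'm) + ('a + 'm)), 'r::comm_ring_1) mp" where
  "psi0 k = Var (Inl (Inl (Inr (snd (snd k))))) *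
     (Var (Inl (Inr (Inl (fst k)))) * Var (Inr (Inl (Inl (fst (snd k))))) -
      Var (Inl (Inr (Inl (fst (snd k))))) * Var (Inr (Inl (Inl (fst k)))))"

definition psi :: "(('a \<times> 'a \<times> 'm) \<Rightarrow>\<^sub>0 int) \<Rightarrow> ((('a + 'm) + ('a + 'm)) + (('a + 'm) + ('a + 'm)), 'r::comm_ring_1) mp" where
  "psi x = (\<Sum>k\<in>Poly_Mapping.keys x. Const (of_int (Poly_Mapping.lookup x k)) * psi0 k)"

lemma psi_S: "finite A \<Longrightarrow> Poly_Mapping.keys x \<subseteq> A \<Longrightarrow>
   psi x = (\<Sum>k\<in>A. Const (of_int (Poly_Mapping.lookup x k)) * psi0 k)"
  unfolding psi_def by (rule sum.mono_neutral_left) (auto simp: in_keys_iff)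

lemma psi_add: "psi (x + y) = psi x + psi y"
proof -
  let ?A = "Poly_Mapping.keys x \<union> Poly_Mapping.keys y"
  have k: "Poly_Mapping.keys (x + y) \<subseteq> ?A" by (rule keys_add)
  show ?thesis
    by (simp add: psi_S[OF _ k] psi_S[of ?A x] psi_S[of ?A y] lookup_add Const_add
        distrib_right sum.distrib)
qed
lemma psi_zero[simp]: "psi 0 = 0" by (simp add: psi_def)
lemma psi_uminus: "psi (- x) = - psi x"
  using psi_add[of x "-x"] by (simp add: eq_neg_iff_add_eq_0 add.commute)
lemma psi_diff: "psi (x - y) = psi x - psi y"
  by (metis diff_conv_add_uminus psi_add psi_uminus)
lemma psi_sum: "psi (\<Sum>i\<in>I. f i) = (\<Sum>i\<in>I. psi (f i))"
  by (induction I rule: infinite_finite_induct) (simp_all add: psi_add)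
lemma psi_single: "psi (Poly_Mapping.single k c) = Const (of_int c) * psi0 k"
  by (cases "c = 0") (simp_all add: psi_def)

lemma psi_curv: "psi (curvature nabla m) = (CK_M nabla m :: _ \<Rightarrow>\<^sub>0 'r::comm_ring_1)"
  by (simp add: curvature_def CK_M_eq psi_sum psi_single psi0_def mult.assoc)

lemma gi_comb:
  assumes "(x::'b::comm_ring_1) = p1 * e1 + p2 * e2 + p3 * e3 + p4 * e4"
    "e1 \<in> gen_ideal I" "e2 \<in> gen_ideal I" "e3 \<in> gen_ideal I" "e4 \<in> gen_ideal I"
  shows "x \<in> gen_ideal I"
  unfolding assms(1) by (intro gi_add gi_mult assms(2-5))

context ctx
begin

abbreviation I2 where "I2 \<equiv> T2_ideal \<iota> smult"

definition "I2B = {p * g |p g. g \<in> Emb ` Tideal (SA_ideal \<iota> smult) \<union> Der ` Tideal (SA_ideal \<iota> smult)}"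

lemma I2_gi: "I2 = gen_ideal (Emb ` Tideal (SA_ideal \<iota> smult) \<union> Der ` Tideal (SA_ideal \<iota> smult))"
  unfolding T2_ideal_def by (rule Tideal_def)

lemma I2_eq: "I2 = gen_subgroup I2B"
  unfolding I2_gi gen_ideal_def I2B_def ..

lemma I2_comb:
  assumes "x = pa * e1 + pb * e2 + pc * e3 + pd * e4"
    "e1 \<in> I2" "e2 \<in> I2" "e3 \<in> I2" "e4 \<in> I2"
  shows "x \<in> I2"
  using assms unfolding I2_gi by (rule gi_comb)

lemma I2_zero: "0 \<in> I2" unfolding I2_gi by (rule gi_zero)

lemma T2_mems:
  assumes "j \<in> SA_rels \<iota> smult"
  shows "Emb (Emb j) \<in> (I2 :: (_, 'r) mp set)" "Emb (Der j) \<in> (I2 :: (_, 'r) mp set)"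
    "Der (Emb j) \<in> (I2 :: (_, 'r) mp set)" "Der (Der j) \<in> (I2 :: (_, 'r) mp set)"
proof -
  have j: "j \<in> SA_ideal \<iota> smult" unfolding SA_ideal_def by (rule gi_base[OF assms])
  have "Emb j \<in> Tideal (SA_ideal \<iota> smult)" "Der j \<in> Tideal (SA_ideal \<iota> smult)"
    unfolding Tideal_def using j by (auto intro!: gi_base)
  then show "Emb (Emb j) \<in> (I2 :: (_, 'r) mp set)" "Emb (Der j) \<in> (I2 :: (_, 'r) mp set)"
    "Der (Emb j) \<in> (I2 :: (_, 'r) mp set)" "Der (Der j) \<in> (I2 :: (_, 'r) mp set)"
    unfolding T2_ideal_def Tideal_def[of "Tideal _"] by (auto intro!: gi_base)
qed

lemma rel_mems:
  "Var (Inl (a + b)) - Var (Inl a) - Var (Inl b) \<in> SA_rels \<iota> smult"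
  "Var (Inl (a * b)) - Var (Inl a) * Var (Inl b) \<in> SA_rels \<iota> smult"
  "Var (Inl 1) - 1 \<in> SA_rels \<iota> smult"
  "Var (Inl (\<iota> r)) - Const r \<in> SA_rels \<iota> smult"
  "Var (Inr (m + n)) - Var (Inr m) - Var (Inr n) \<in> SA_rels \<iota> smult"
  "Var (Inr (smult a m)) - Var (Inl a) * Var (Inr m) \<in> SA_rels \<iota> smult"
  unfolding SA_rels_def by blast+

abbreviation (input) vA where "vA a \<equiv> (Var (Inl (Inl (Inl a))) :: (_, 'r) mp)"
abbreviation (input) vM where "vM m \<equiv> (Var (Inl (Inl (Inr m))) :: (_, 'r) mp)"
abbreviation (input) vdA where "vdA a \<equiv> (Var (Inl (Inr (Inl a))) :: (_, 'r) mp)"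
abbreviation (input) vd'A where "vd'A a \<equiv> (Var (Inr (Inl (Inl a))) :: (_, 'r) mp)"

lemma I2_facts:
  "vdA (a + b) - vdA a - vdA b \<in> I2"
  "vd'A (a + b) - vd'A a - vd'A b \<in> I2"
  "vdA (a * b) - (vA a * vdA b + vdA a * vA b) \<in> I2"
  "vd'A (a * b) - (vA a * vd'A b + vd'A a * vA b) \<in> I2"
  "vM (m + n) - vM m - vM n \<in> I2"
  "vM (smult a m) - vA a * vM m \<in> I2"
  "vdA (\<iota> r) \<in> I2"
  "vd'A (\<iota> r) \<in> I2"
  using T2_mems(2)[OF rel_mems(1)[of a b]] T2_mems(3)[OF rel_mems(1)[of a b]]
    T2_mems(2)[OF rel_mems(2)[of a b]] T2_mems(3)[OF rel_mems(2)[of a b]]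
    T2_mems(1)[OF rel_mems(5)[of m n]] T2_mems(1)[OF rel_mems(6)[of a m]]
    T2_mems(2)[OF rel_mems(4)[of r]] T2_mems(3)[OF rel_mems(4)[of r]]
  by (simp_all add: Tsimps)

lemma psi_rel: "g \<in> OM2_rels \<iota> smult \<Longrightarrow> (psi g :: (_, 'r) mp) \<in> I2"
proof -
  assume "g \<in> OM2_rels \<iota> smult"
  then consider
      (1) a a' b m where "g = S (a + a') b m - S a b m - S a' b m"
    | (2) a b b' m where "g = S a (b + b') m - S a b m - S a b' m"
    | (3) a b m n where "g = S a b (m + n) - S a b m - S a b n"
    | (4) a b c m where "g = S (a * c) b m - S a b (smult c m) - S c b (smult a m)"
    | (5) a b c m where "g = S a (b * c) m - S a b (smult c m) - S a c (smult b m)"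
    | (6) r b m where "g = S (\<iota> r) b m"
    | (7) a r m where "g = S a (\<iota> r) m"
    | (8) a m where "g = S a a m"
    using \<open>g \<in> OM2_rels \<iota> smult\<close> unfolding OM2_rels_def
    apply -
    apply (elim UnE CollectE exE conjE)
    by blast+
  then show ?thesis
  proof cases
    case 1 show ?thesis unfolding 1
      by (rule I2_comb[where pa="vM m * vd'A b" and pb="- (vM m * vdA b)" and pc="0" and pd="0", OF _ I2_facts(1)[of a a'] I2_facts(2)[of a a'] I2_zero I2_zero])
         (simp add: psi_diff psi_add psi_single psi0_def algebra_simps)
  next
    case 2 show ?thesis unfolding 2
      by (rule I2_comb[where pa="- (vM m * vd'A a)" and pb="vM m * vdA a" and pc="0" and pd="0", OF _ I2_facts(1)[of b b'] I2_facts(2)[of b b'] I2_zero I2_zero])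
         (simp add: psi_diff psi_add psi_single psi0_def algebra_simps)
  next
    case 3 show ?thesis unfolding 3
      by (rule I2_comb[where pa="vdA a * vd'A b - vdA b * vd'A a" and pb="0" and pc="0" and pd="0", OF _ I2_facts(5)[of m n] I2_zero I2_zero I2_zero])
         (simp add: psi_diff psi_add psi_single psi0_def algebra_simps)
  next
    case 4 show ?thesis unfolding 4
      by (rule I2_comb[where pa="vM m * vd'A b" and pb="- (vM m * vdA b)" and pc="- (vdA a * vd'A b - vdA b * vd'A a)" and pd="- (vdA c * vd'A b - vdA b * vd'A c)", OF _ I2_facts(3)[of a c] I2_facts(4)[of a c] I2_facts(6)[of c m] I2_facts(6)[of a m]])
         (simp add: psi_diff psi_add psi_single psi0_def algebra_simps)
  next
    case 5 show ?thesis unfolding 5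
      by (rule I2_comb[where pa="- (vM m * vd'A a)" and pb="vM m * vdA a" and pc="- (vdA a * vd'A b - vdA b * vd'A a)" and pd="- (vdA a * vd'A c - vdA c * vd'A a)", OF _ I2_facts(3)[of b c] I2_facts(4)[of b c] I2_facts(6)[of c m] I2_facts(6)[of b m]])
         (simp add: psi_diff psi_add psi_single psi0_def algebra_simps)
  next
    case 6 show ?thesis unfolding 6
      by (rule I2_comb[where pa="vM m * vd'A b" and pb="- (vM m * vdA b)" and pc="0" and pd="0", OF _ I2_facts(7)[of r] I2_facts(8)[of r] I2_zero I2_zero])
         (simp add: psi_diff psi_add psi_single psi0_def algebra_simps)
  next
    case 7 show ?thesis unfolding 7
      by (rule I2_comb[where pa="- (vM m * vd'A a)" and pb="vM m * vdA a" and pc="0" and pd="0", OF _ I2_facts(7)[of r] I2_facts(8)[of r] I2_zero I2_zero])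
         (simp add: psi_diff psi_add psi_single psi0_def algebra_simps)
  next
    case 8 then show ?thesis by (simp add: psi_single psi0_def I2_zero)
  qed
qed

lemma curv_flat:
  assumes "eq2 (curvature nabla m) 0"
  shows "(CK_M nabla m :: (_, 'r) mp) \<in> I2"
proof -
  have "curvature nabla m \<in> G2" using assms by (simp add: OM2_eq_def)
  have "(psi (curvature nabla m) :: (_, 'r) mp) \<in> gen_subgroup I2B"
  proof (rule gs_hom[where f=psi, OF _ _ \<open>curvature nabla m \<in> G2\<close>])
    show "psi (x + y) = psi x + psi y" for x y by (rule psi_add)
    show "psi g \<in> gen_subgroup I2B" if "g \<in> OM2_rels \<iota> smult" for g
      using psi_rel[OF that] unfolding I2_eq .
  qed
  then show ?thesis by (simp add: psi_curv I2_eq)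
qed

end

type_synonym ('a, 'm) qv = "'m + ('a + 'a)"

definition qmon3 :: "'m \<Rightarrow> 'a \<Rightarrow> 'a \<Rightarrow> ('a, 'm) qv \<Rightarrow>\<^sub>0 nat" where
  "qmon3 m a b = Poly_Mapping.single (Inl m) 1 + Poly_Mapping.single (Inr (Inl a)) 1 + Poly_Mapping.single (Inr (Inr b)) 1"

lemma qmon3_lookup:
  "Poly_Mapping.lookup (qmon3 m a b) (Inl m') = (if m = m' then 1 else 0)"
  "Poly_Mapping.lookup (qmon3 m a b) (Inr (Inl a')) = (if a = a' then 1 else 0)"
  "Poly_Mapping.lookup (qmon3 m a b) (Inr (Inr b')) = (if b = b' then 1 else 0)"
  by (simp_all add: qmon3_def lookup_add lookup_single when_def)

lemma qmon3_inj: assumes e: "qmon3 m a b = qmon3 m' a' b'" shows "m = m' \<and> a = a' \<and> b = b'"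
proof -
  have 1: "Poly_Mapping.lookup (qmon3 m a b) (Inl m) = 1"
    "Poly_Mapping.lookup (qmon3 m a b) (Inr (Inl a)) = 1"
    "Poly_Mapping.lookup (qmon3 m a b) (Inr (Inr b)) = 1" by (simp_all only: qmon3_lookup if_True refl)
  have "m' = m" using 1(1) unfolding e qmon3_lookup by (cases "m' = m") simp_all
  moreover have "a' = a" using 1(2) unfolding e qmon3_lookup by (cases "a' = a") simp_all
  moreover have "b' = b" using 1(3) unfolding e qmon3_lookup by (cases "b' = b") simp_all
  ultimately show ?thesis by simp
qed

abbreviation "xX m \<equiv> (Poly_Mapping.single (Inl m) 1 :: ('a, 'm) qv \<Rightarrow>\<^sub>0 nat)"
abbreviation "xE a \<equiv> (Poly_Mapping.single (Inr (Inl a)) 1 :: ('a, 'm) qv \<Rightarrow>\<^sub>0 nat)"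
abbreviation "xE' a \<equiv> (Poly_Mapping.single (Inr (Inr a)) 1 :: ('a, 'm) qv \<Rightarrow>\<^sub>0 nat)"

lemma shape_X: "(\<alpha> + xX n = qmon3 m a b) \<longleftrightarrow> (n = m \<and> \<alpha> = xE a + xE' b)"
proof
  assume e: "\<alpha> + xX n = qmon3 m a b"
  have l: "Poly_Mapping.lookup \<alpha> w + Poly_Mapping.lookup (xX n) w = Poly_Mapping.lookup (qmon3 m a b) w" for w
    using arg_cong[OF e, of "\<lambda>p. Poly_Mapping.lookup p w"] by (simp add: lookup_add)
  have "Poly_Mapping.lookup (qmon3 m a b) (Inl n) \<noteq> 0" using l[of "Inl n"] by simp
  then have nm: "n = m" by (simp add: qmon3_lookup split: if_splits)
  have "\<alpha> = xE a + xE' b"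
  proof (rule poly_mapping_eqI)
    fix w
    show "Poly_Mapping.lookup \<alpha> w = Poly_Mapping.lookup (xE a + xE' b) w"
      using l[of w] unfolding nm
      by (cases w rule: sum.exhaust[case_product sum.exhaust])
         (auto simp: qmon3_def lookup_add lookup_single when_def split: sum.splits if_splits)
  qed
  with nm show "n = m \<and> \<alpha> = xE a + xE' b" by simp
next
  assume "n = m \<and> \<alpha> = xE a + xE' b"
  then show "\<alpha> + xX n = qmon3 m a b" by (simp add: qmon3_def add_ac)
qed


lemma shape_E: "(\<alpha> + xE n = qmon3 m a b) \<longleftrightarrow> (n = a \<and> \<alpha> = xX m + xE' b)"
proof
  assume e: "\<alpha> + xE n = qmon3 m a b"
  have l: "Poly_Mapping.lookup \<alpha> w + Poly_Mapping.lookup (xE n) w = Poly_Mapping.lookup (qmon3 m a b) w" for w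
    using arg_cong[OF e, of "\<lambda>p. Poly_Mapping.lookup p w"] by (simp add: lookup_add)
  have "Poly_Mapping.lookup (qmon3 m a b) (Inr (Inl n)) \<noteq> 0" using l[of "Inr (Inl n)"] by simp
  then have nm: "n = a" by (simp add: qmon3_lookup split: if_splits)
  have "\<alpha> = xX m + xE' b"
  proof (rule poly_mapping_eqI)
    fix w
    show "Poly_Mapping.lookup \<alpha> w = Poly_Mapping.lookup (xX m + xE' b) w"
      using l[of w] unfolding nm
      by (cases w rule: sum.exhaust[case_product sum.exhaust])
         (auto simp: qmon3_def lookup_add lookup_single when_def split: sum.splits if_splits)
  qed
  with nm show "n = a \<and> \<alpha> = xX m + xE' b" by simp
next
  assume "n = a \<and> \<alpha> = xX m + xE' b"
  then show "\<alpha> + xE n = qmon3 m a b" by (simp add: qmon3_def add_ac)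
qed

lemma shape_E': "(\<alpha> + xE' n = qmon3 m a b) \<longleftrightarrow> (n = b \<and> \<alpha> = xX m + xE a)"
proof
  assume e: "\<alpha> + xE' n = qmon3 m a b"
  have l: "Poly_Mapping.lookup \<alpha> w + Poly_Mapping.lookup (xE' n) w = Poly_Mapping.lookup (qmon3 m a b) w" for w
    using arg_cong[OF e, of "\<lambda>p. Poly_Mapping.lookup p w"] by (simp add: lookup_add)
  have "Poly_Mapping.lookup (qmon3 m a b) (Inr (Inr n)) \<noteq> 0" using l[of "Inr (Inr n)"] by simp
  then have nm: "n = b" by (simp add: qmon3_lookup split: if_splits)
  have "\<alpha> = xX m + xE a"
  proof (rule poly_mapping_eqI)
    fix w
    show "Poly_Mapping.lookup \<alpha> w = Poly_Mapping.lookup (xX m + xE a) w"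
      using l[of w] unfolding nm
      by (cases w rule: sum.exhaust[case_product sum.exhaust])
         (auto simp: qmon3_def lookup_add lookup_single when_def split: sum.splits if_splits)
  qed
  with nm show "n = b \<and> \<alpha> = xX m + xE a" by simp
next
  assume "n = b \<and> \<alpha> = xX m + xE a"
  then show "\<alpha> + xE' n = qmon3 m a b" by (simp add: qmon3_def add_ac)
qed

lemma shape_EE: "(\<alpha> + (xE n + xE' n') = qmon3 m a b) \<longleftrightarrow> (n = a \<and> n' = b \<and> \<alpha> = xX m)"
proof -
  have "(\<alpha> + (xE n + xE' n') = qmon3 m a b) \<longleftrightarrow> ((\<alpha> + xE n) + xE' n' = qmon3 m a b)"
    by (simp add: add.assoc)
  also have "\<dots> \<longleftrightarrow> (n' = b \<and> \<alpha> + xE n = xX m + xE a)" by (rule shape_E')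
  also have "(\<alpha> + xE n = xX m + xE a) \<longleftrightarrow> (n = a \<and> \<alpha> = xX m)"
  proof
    assume e: "\<alpha> + xE n = xX m + xE a"
    have l: "Poly_Mapping.lookup \<alpha> w + Poly_Mapping.lookup (xE n) w = Poly_Mapping.lookup (xX m + xE a) w" for w
      using arg_cong[OF e, of "\<lambda>p. Poly_Mapping.lookup p w"] by (simp add: lookup_add)
    have "Poly_Mapping.lookup (xX m + xE a) (Inr (Inl n)) \<noteq> 0" using l[of "Inr (Inl n)"] by simp
    then have nm: "n = a" by (simp add: lookup_add lookup_single when_def split: if_splits)
    have "\<alpha> = xX m"
    proof (rule poly_mapping_eqI)
      fix w
      show "Poly_Mapping.lookup \<alpha> w = Poly_Mapping.lookup (xX m) w"
        using l[of w] unfolding nm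
        by (cases w rule: sum.exhaust[case_product sum.exhaust])
           (auto simp: lookup_add lookup_single when_def split: sum.splits if_splits)
    qed
    with nm show "n = a \<and> \<alpha> = xX m" by simp
  qed (simp add: add.commute)
  finally show ?thesis by blast
qed

definition fmon :: "('a \<Rightarrow> 'm \<Rightarrow> 'm) \<Rightarrow> 'a \<Rightarrow> (('a, 'm) qv \<Rightarrow>\<^sub>0 nat) \<Rightarrow> ('a \<times> 'a \<times> 'm) \<Rightarrow>\<^sub>0 int" where
  "fmon smult c mon = (if \<exists>m a b. mon = qmon3 m a b
      then (case THE (m, a, b). mon = qmon3 m a b of (m, a, b) \<Rightarrow> frag_of (a, b, smult c m))
      else 0)"

definition Fin :: "('a::comm_ring_1 \<Rightarrow> 'm \<Rightarrow> 'm) \<Rightarrow> (('a, 'm) qv, 'a) mp \<Rightarrow> ('a \<times> 'a \<times> 'm) \<Rightarrow>\<^sub>0 int" where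
  "Fin smult P = (\<Sum>mon\<in>Poly_Mapping.keys P. fmon smult (Poly_Mapping.lookup P mon) mon)"

lemma fmon_qmon3: "fmon smult c (qmon3 m a b) = frag_of (a, b, smult c m)"
proof -
  have "(THE (m', a', b'). qmon3 m a b = qmon3 m' a' b') = (m, a, b)"
  proof (rule the_equality)
    show "case (m, a, b) of (m', a', b') \<Rightarrow> qmon3 m a b = qmon3 m' a' b'" by simp
  next
    fix x assume h: "case x of (m', a', b') \<Rightarrow> qmon3 m a b = qmon3 m' a' b'"
    obtain m' a' b' where x: "x = (m', a', b')" by (cases x) blast
    from h have "qmon3 m a b = qmon3 m' a' b'" by (simp add: x)
    from qmon3_inj[OF this] show "x = (m, a, b)" unfolding x by (intro prod_eqI) simp_all
  qed
  then show ?thesis by (auto simp: fmon_def)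
qed

lemma fmon_other: "\<not> (\<exists>m a b. mon = qmon3 m a b) \<Longrightarrow> fmon smult c mon = 0"
  by (simp add: fmon_def)

lemma fmon_X1: "\<alpha> = xE a + xE' b \<Longrightarrow> fmon smult c (\<alpha> + xX n) = frag_of (a, b, smult c n)"
  using shape_X[of \<alpha> n n a b] by (simp add: fmon_qmon3)
lemma fmon_X0: "\<not> (\<exists>a b. \<alpha> = xE a + xE' b) \<Longrightarrow> fmon smult c (\<alpha> + xX n) = 0"
proof -
  assume F: "\<not> (\<exists>a b. \<alpha> = xE a + xE' b)"
  have "\<not> (\<exists>m a b. \<alpha> + xX n = qmon3 m a b)"
  proof
    assume "\<exists>m a b. \<alpha> + xX n = qmon3 m a b"
    then obtain m a b where "\<alpha> + xX n = qmon3 m a b" by blast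
    then have "\<alpha> = xE a + xE' b" using shape_X[of \<alpha> n m a b] by simp
    with F show False by blast
  qed
  then show ?thesis by (simp add: fmon_other)
qed

lemma fmon_E1: "\<alpha> = xX m + xE' b \<Longrightarrow> fmon smult c (\<alpha> + xE n) = frag_of (n, b, smult c m)"
  using shape_E[of \<alpha> n m n b] by (simp add: fmon_qmon3)
lemma fmon_E0: "\<not> (\<exists>m b. \<alpha> = xX m + xE' b) \<Longrightarrow> fmon smult c (\<alpha> + xE n) = 0"
proof -
  assume F: "\<not> (\<exists>m b. \<alpha> = xX m + xE' b)"
  have "\<not> (\<exists>m a b. \<alpha> + xE n = qmon3 m a b)"
  proof
    assume "\<exists>m a b. \<alpha> + xE n = qmon3 m a b"
    then obtain m a b where "\<alpha> + xE n = qmon3 m a b" by blast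
    then have "\<alpha> = xX m + xE' b" using shape_E[of \<alpha> n m a b] by simp
    with F show False by blast
  qed
  then show ?thesis by (simp add: fmon_other)
qed

lemma fmon_E'1: "\<alpha> = xX m + xE a \<Longrightarrow> fmon smult c (\<alpha> + xE' n) = frag_of (a, n, smult c m)"
  using shape_E'[of \<alpha> n m a n] by (simp add: fmon_qmon3)
lemma fmon_E'0: "\<not> (\<exists>m a. \<alpha> = xX m + xE a) \<Longrightarrow> fmon smult c (\<alpha> + xE' n) = 0"
proof -
  assume F: "\<not> (\<exists>m a. \<alpha> = xX m + xE a)"
  have "\<not> (\<exists>m a b. \<alpha> + xE' n = qmon3 m a b)"
  proof
    assume "\<exists>m a b. \<alpha> + xE' n = qmon3 m a b"
    then obtain m a b where "\<alpha> + xE' n = qmon3 m a b" by blast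
    then have "\<alpha> = xX m + xE a" using shape_E'[of \<alpha> n m a b] by simp
    with F show False by blast
  qed
  then show ?thesis by (simp add: fmon_other)
qed

lemma fmon_EE1: "\<alpha> = xX m \<Longrightarrow> fmon smult c (\<alpha> + (xE n + xE' n')) = frag_of (n, n', smult c m)"
  using shape_EE[of \<alpha> n n' m n n'] by (simp add: fmon_qmon3)
lemma fmon_EE0: "\<not> (\<exists>m. \<alpha> = xX m) \<Longrightarrow> fmon smult c (\<alpha> + (xE n + xE' n')) = 0"
proof -
  assume F: "\<not> (\<exists>m. \<alpha> = xX m)"
  have "\<not> (\<exists>m a b. \<alpha> + (xE n + xE' n') = qmon3 m a b)"
  proof
    assume "\<exists>m a b. \<alpha> + (xE n + xE' n') = qmon3 m a b"
    then obtain m a b where "\<alpha> + (xE n + xE' n') = qmon3 m a b" by blast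
    then have "\<alpha> = xX m" using shape_EE[of \<alpha> n n' m a b] by simp
    with F show False by blast
  qed
  then show ?thesis by (simp add: fmon_other)
qed

abbreviation "QX m \<equiv> (Var (Inl m) :: (('a, 'm) qv, 'a::comm_ring_1) mp)"
abbreviation "QE a \<equiv> (Var (Inr (Inl a)) :: (('a, 'm) qv, 'a::comm_ring_1) mp)"
abbreviation "QE' a \<equiv> (Var (Inr (Inr a)) :: (('a, 'm) qv, 'a::comm_ring_1) mp)"

lemma single_mult_Var:
  "Poly_Mapping.single \<alpha> c * Var v = Poly_Mapping.single (\<alpha> + Poly_Mapping.single v 1) c"
  "Poly_Mapping.single \<alpha> c * (Const d * Var v) = Poly_Mapping.single (\<alpha> + Poly_Mapping.single v 1) (c * d)"
  "Poly_Mapping.single \<alpha> c * (Var v * Var w) =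
     Poly_Mapping.single (\<alpha> + (Poly_Mapping.single v 1 + Poly_Mapping.single w 1)) c"
  by (simp_all add: Var_def Const_def mult_single)

context ctx
begin

lemma fmon_add: "eq2 (fmon smult (r + s) mon) (fmon smult r mon + fmon smult s mon)"
proof (cases "\<exists>m a b. mon = qmon3 m a b")
  case True
  then obtain m a b where mon: "mon = qmon3 m a b" by blast
  show ?thesis unfolding mon fmon_qmon3 scale_left_distrib by (rule R_m_add)
next
  case False then show ?thesis by (simp add: fmon_other eq2_refl)
qed

lemma fmon_zero: "eq2 (fmon smult 0 mon) 0"
proof (cases "\<exists>m a b. mon = qmon3 m a b")
  case True
  then obtain m a b where mon: "mon = qmon3 m a b" by blast
  show ?thesis unfolding mon fmon_qmon3 scale_zero_left by (rule R_m0)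
next
  case False then show ?thesis by (simp add: fmon_other eq2_refl)
qed

lemma Fin_S:
  assumes "finite A" "Poly_Mapping.keys p \<subseteq> A"
  shows "eq2 (Fin smult p) (\<Sum>mon\<in>A. fmon smult (Poly_Mapping.lookup p mon) mon)"
proof -
  have "(\<Sum>mon\<in>A. fmon smult (Poly_Mapping.lookup p mon) mon) =
     Fin smult p + (\<Sum>mon\<in>A - Poly_Mapping.keys p. fmon smult (Poly_Mapping.lookup p mon) mon)"
    unfolding Fin_def using sum.subset_diff[OF assms(2) assms(1)] by (simp add: add.commute)
  moreover have "eq2 (\<Sum>mon\<in>A - Poly_Mapping.keys p. fmon smult (Poly_Mapping.lookup p mon) mon) (\<Sum>mon\<in>A - Poly_Mapping.keys p. 0)"
    by (rule eq2_sum) (simp add: in_keys_iff fmon_zero)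
  ultimately show ?thesis using eq2_add[OF eq2_refl[of "Fin smult p"]] eq2_sym by fastforce
qed

lemma Fin_zero[simp]: "Fin smult 0 = 0" by (simp add: Fin_def)

lemma Fin_add: "eq2 (Fin smult (p + q)) (Fin smult p + Fin smult q)"
proof -
  let ?A = "Poly_Mapping.keys p \<union> Poly_Mapping.keys q"
  have "eq2 (Fin smult (p + q)) (\<Sum>mon\<in>?A. fmon smult (Poly_Mapping.lookup (p + q) mon) mon)"
  proof (rule Fin_S)
    show "Poly_Mapping.keys (p + q) \<subseteq> ?A" by (rule keys_add)
  qed simp
  also have "eq2 \<dots> (\<Sum>mon\<in>?A. fmon smult (Poly_Mapping.lookup p mon) mon + fmon smult (Poly_Mapping.lookup q mon) mon)"
    by (rule eq2_sum) (simp add: lookup_add fmon_add)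
  also have "\<dots> = (\<Sum>mon\<in>?A. fmon smult (Poly_Mapping.lookup p mon) mon) + (\<Sum>mon\<in>?A. fmon smult (Poly_Mapping.lookup q mon) mon)"
    by (rule sum.distrib)
  also have "eq2 \<dots> (Fin smult p + Fin smult q)"
    by (intro eq2_add eq2_sym[OF Fin_S]) auto
  finally show ?thesis .
qed

lemma Fin_uminus: "eq2 (Fin smult (- p)) (- Fin smult p)"
proof -
  have "eq2 0 (Fin smult p + Fin smult (- p))" using Fin_add[of p "-p"] by simp
  then have "eq2 (0 - Fin smult p) (Fin smult p + Fin smult (- p) - Fin smult p)"
    by (rule eq2_diff) (rule eq2_refl)
  then show ?thesis by (simp add: eq2_sym)
qed

lemma Fin_diff: "eq2 (Fin smult (p - q)) (Fin smult p - Fin smult q)"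
  using eq2_trans[OF Fin_add[of p "-q"] eq2_add[OF eq2_refl Fin_uminus[of q]]] by simp

lemma Fin_sum: "eq2 (Fin smult (\<Sum>i\<in>I. f i)) (\<Sum>i\<in>I. Fin smult (f i))"
proof (induction I rule: infinite_finite_induct)
  case (insert x F)
  then show ?case using eq2_trans[OF Fin_add eq2_add[OF eq2_refl insert.IH]] by simp
qed (simp_all add: eq2_refl)

lemma Fin_single: "eq2 (Fin smult (Poly_Mapping.single mon r)) (fmon smult r mon)"
  using Fin_S[of "{mon}" "Poly_Mapping.single mon r"] by simp

end

context ctx
begin

definition QGens :: "(('a, 'm) qv, 'a) mp set" where
  "QGens = {QX (m + n) - QX m - QX n | m n. True}
    \<union> {QX (smult a m) - Const a * QX m | a m. True}
    \<union> {QE (a + b) - QE a - QE b | a b. True}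
    \<union> {QE' (a + b) - QE' a - QE' b | a b. True}
    \<union> {QE (a * b) - Const a * QE b - Const b * QE a | a b. True}
    \<union> {QE' (a * b) - Const a * QE' b - Const b * QE' a | a b. True}
    \<union> {QE (\<iota> r) | r. True}
    \<union> {QE' (\<iota> r) | r. True}
    \<union> {QE a * QE' b + QE b * QE' a | a b. True}"

lemma eq2_sub3: "eq2 X (Y + Z) \<Longrightarrow> eq2 (X - Y - Z) 0"
  by (simp add: OM2_eq_def diff_diff_eq)

lemma eq2_sub3': "eq2 X Y \<Longrightarrow> eq2 (X - Y) 0"
  by (simp add: OM2_eq_def)

lemma Fin3: "eq2 (Fin smult (Poly_Mapping.single K1 r1 - Poly_Mapping.single K2 r2 - Poly_Mapping.single K3 r3))
   (fmon smult r1 K1 - fmon smult r2 K2 - fmon smult r3 K3)"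
  by (rule eq2_trans[OF Fin_diff], rule eq2_diff[OF _ Fin_single],
      rule eq2_trans[OF Fin_diff], rule eq2_diff[OF Fin_single Fin_single])

lemma Fin2: "eq2 (Fin smult (Poly_Mapping.single K1 r1 - Poly_Mapping.single K2 r2))
   (fmon smult r1 K1 - fmon smult r2 K2)"
  by (rule eq2_trans[OF Fin_diff], rule eq2_diff[OF Fin_single Fin_single])

lemma Fin2p: "eq2 (Fin smult (Poly_Mapping.single K1 r1 + Poly_Mapping.single K2 r2))
   (fmon smult r1 K1 + fmon smult r2 K2)"
  by (rule eq2_trans[OF Fin_add], rule eq2_add[OF Fin_single Fin_single])

lemma eq2_0: "eq2 X 0 \<Longrightarrow> eq2 Y X \<Longrightarrow> eq2 Y 0" using eq2_trans by blast

lemma FG1: "eq2 (Fin smult (Poly_Mapping.single \<alpha> c * (QX (m + n) - QX m - QX n))) 0"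
proof -
  have e: "Poly_Mapping.single \<alpha> c * (QX (m + n) - QX m - QX n) =
    Poly_Mapping.single (\<alpha> + xX (m + n)) c - Poly_Mapping.single (\<alpha> + xX m) c - Poly_Mapping.single (\<alpha> + xX n) c"
    by (simp add: right_diff_distrib single_mult_Var)
  have "eq2 (fmon smult c (\<alpha> + xX (m + n)) - fmon smult c (\<alpha> + xX m) - fmon smult c (\<alpha> + xX n)) 0"
  proof (cases "\<exists>a b. \<alpha> = xE a + xE' b")
    case True
    then obtain a b where ab: "\<alpha> = xE a + xE' b" by blast
    show ?thesis unfolding fmon_X1[OF ab] scale_right_distrib by (rule eq2_sub3, rule R_m_add)
  next
    case False then show ?thesis by (simp only: fmon_X0[OF False] diff_zero add_0 eq2_refl)
  qed
  then show ?thesis unfolding e by (rule eq2_0[OF _ Fin3])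
qed

lemma FG2: "eq2 (Fin smult (Poly_Mapping.single \<alpha> c * (QX (smult a m) - Const a * QX m))) 0"
proof -
  have e: "Poly_Mapping.single \<alpha> c * (QX (smult a m) - Const a * QX m) =
    Poly_Mapping.single (\<alpha> + xX (smult a m)) c - Poly_Mapping.single (\<alpha> + xX m) (c * a)"
    by (simp add: right_diff_distrib single_mult_Var)
  have "eq2 (fmon smult c (\<alpha> + xX (smult a m)) - fmon smult (c * a) (\<alpha> + xX m)) 0"
  proof (cases "\<exists>a b. \<alpha> = xE a + xE' b")
    case True
    then obtain a' b where ab: "\<alpha> = xE a' + xE' b" by blast
    show ?thesis unfolding fmon_X1[OF ab] by (simp add: eq2_refl)
  next
    case False then show ?thesis by (simp only: fmon_X0[OF False] diff_zero add_0 eq2_refl)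
  qed
  then show ?thesis unfolding e by (rule eq2_0[OF _ Fin2])
qed

lemma FG3: "eq2 (Fin smult (Poly_Mapping.single \<alpha> c * (QE (a + b) - QE a - QE b))) 0"
proof -
  have e: "Poly_Mapping.single \<alpha> c * (QE (a + b) - QE a - QE b) =
    Poly_Mapping.single (\<alpha> + xE (a + b)) c - Poly_Mapping.single (\<alpha> + xE a) c - Poly_Mapping.single (\<alpha> + xE b) c"
    by (simp add: right_diff_distrib single_mult_Var)
  have "eq2 (fmon smult c (\<alpha> + xE (a + b)) - fmon smult c (\<alpha> + xE a) - fmon smult c (\<alpha> + xE b)) 0"
  proof (cases "\<exists>m b. \<alpha> = xX m + xE' b")
    case True
    then obtain m b' where ab: "\<alpha> = xX m + xE' b'" by blast
    show ?thesis unfolding fmon_E1[OF ab] by (rule eq2_sub3, rule R_a_add)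
  next
    case False then show ?thesis by (simp only: fmon_E0[OF False] diff_zero add_0 eq2_refl)
  qed
  then show ?thesis unfolding e by (rule eq2_0[OF _ Fin3])
qed

lemma FG4: "eq2 (Fin smult (Poly_Mapping.single \<alpha> c * (QE' (a + b) - QE' a - QE' b))) 0"
proof -
  have e: "Poly_Mapping.single \<alpha> c * (QE' (a + b) - QE' a - QE' b) =
    Poly_Mapping.single (\<alpha> + xE' (a + b)) c - Poly_Mapping.single (\<alpha> + xE' a) c - Poly_Mapping.single (\<alpha> + xE' b) c"
    by (simp add: right_diff_distrib single_mult_Var)
  have "eq2 (fmon smult c (\<alpha> + xE' (a + b)) - fmon smult c (\<alpha> + xE' a) - fmon smult c (\<alpha> + xE' b)) 0"
  proof (cases "\<exists>m a. \<alpha> = xX m + xE a")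
    case True
    then obtain m a' where ab: "\<alpha> = xX m + xE a'" by blast
    show ?thesis unfolding fmon_E'1[OF ab] by (rule eq2_sub3, rule R_b_add)
  next
    case False then show ?thesis by (simp only: fmon_E'0[OF False] diff_zero add_0 eq2_refl)
  qed
  then show ?thesis unfolding e by (rule eq2_0[OF _ Fin3])
qed

lemma FG5: "eq2 (Fin smult (Poly_Mapping.single \<alpha> c * (QE (a * b) - Const a * QE b - Const b * QE a))) 0"
proof -
  have e: "Poly_Mapping.single \<alpha> c * (QE (a * b) - Const a * QE b - Const b * QE a) =
    Poly_Mapping.single (\<alpha> + xE (a * b)) c - Poly_Mapping.single (\<alpha> + xE b) (c * a) - Poly_Mapping.single (\<alpha> + xE a) (c * b)"
    by (simp add: right_diff_distrib single_mult_Var)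
  have "eq2 (fmon smult c (\<alpha> + xE (a * b)) - fmon smult (c * a) (\<alpha> + xE b) - fmon smult (c * b) (\<alpha> + xE a)) 0"
  proof (cases "\<exists>m b. \<alpha> = xX m + xE' b")
    case True
    then obtain m b' where ab: "\<alpha> = xX m + xE' b'" by blast
    have "eq2 (S (a * b) b' (smult c m)) (S b b' (smult (c * a) m) + S a b' (smult (c * b) m))"
      using R_leib1[of a b b' "smult c m"] by (simp add: mult_ac add.commute)
    then show ?thesis unfolding fmon_E1[OF ab] by (rule eq2_sub3)
  next
    case False then show ?thesis by (simp only: fmon_E0[OF False] diff_zero add_0 eq2_refl)
  qed
  then show ?thesis unfolding e by (rule eq2_0[OF _ Fin3])
qed

lemma FG6: "eq2 (Fin smult (Poly_Mapping.single \<alpha> c * (QE' (a * b) - Const a * QE' b - Const b * QE' a))) 0"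
proof -
  have e: "Poly_Mapping.single \<alpha> c * (QE' (a * b) - Const a * QE' b - Const b * QE' a) =
    Poly_Mapping.single (\<alpha> + xE' (a * b)) c - Poly_Mapping.single (\<alpha> + xE' b) (c * a) - Poly_Mapping.single (\<alpha> + xE' a) (c * b)"
    by (simp add: right_diff_distrib single_mult_Var)
  have "eq2 (fmon smult c (\<alpha> + xE' (a * b)) - fmon smult (c * a) (\<alpha> + xE' b) - fmon smult (c * b) (\<alpha> + xE' a)) 0"
  proof (cases "\<exists>m a. \<alpha> = xX m + xE a")
    case True
    then obtain m a' where ab: "\<alpha> = xX m + xE a'" by blast
    have "eq2 (S a' (a * b) (smult c m)) (S a' b (smult (c * a) m) + S a' a (smult (c * b) m))"
      using R_leib2[of a' a b "smult c m"] by (simp add: mult_ac add.commute)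
    then show ?thesis unfolding fmon_E'1[OF ab] by (rule eq2_sub3)
  next
    case False then show ?thesis by (simp only: fmon_E'0[OF False] diff_zero add_0 eq2_refl)
  qed
  then show ?thesis unfolding e by (rule eq2_0[OF _ Fin3])
qed

lemma FG7: "eq2 (Fin smult (Poly_Mapping.single \<alpha> c * QE (\<iota> r))) 0"
proof -
  have e: "Poly_Mapping.single \<alpha> c * QE (\<iota> r) = Poly_Mapping.single (\<alpha> + xE (\<iota> r)) c"
    by (simp add: single_mult_Var)
  have "eq2 (fmon smult c (\<alpha> + xE (\<iota> r))) 0"
  proof (cases "\<exists>m b. \<alpha> = xX m + xE' b")
    case True
    then obtain m b' where ab: "\<alpha> = xX m + xE' b'" by blast
    show ?thesis unfolding fmon_E1[OF ab] by (rule R_iota1)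
  next
    case False then show ?thesis by (simp only: fmon_E0[OF False] diff_zero add_0 eq2_refl)
  qed
  then show ?thesis unfolding e by (rule eq2_0[OF _ Fin_single])
qed

lemma FG8: "eq2 (Fin smult (Poly_Mapping.single \<alpha> c * QE' (\<iota> r))) 0"
proof -
  have e: "Poly_Mapping.single \<alpha> c * QE' (\<iota> r) = Poly_Mapping.single (\<alpha> + xE' (\<iota> r)) c"
    by (simp add: single_mult_Var)
  have "eq2 (fmon smult c (\<alpha> + xE' (\<iota> r))) 0"
  proof (cases "\<exists>m a. \<alpha> = xX m + xE a")
    case True
    then obtain m a' where ab: "\<alpha> = xX m + xE a'" by blast
    show ?thesis unfolding fmon_E'1[OF ab] by (rule R_iota2)
  next
    case False then show ?thesis by (simp only: fmon_E'0[OF False] diff_zero add_0 eq2_refl)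
  qed
  then show ?thesis unfolding e by (rule eq2_0[OF _ Fin_single])
qed

lemma FG9: "eq2 (Fin smult (Poly_Mapping.single \<alpha> c * (QE a * QE' b + QE b * QE' a))) 0"
proof -
  have e: "Poly_Mapping.single \<alpha> c * (QE a * QE' b + QE b * QE' a) =
    Poly_Mapping.single (\<alpha> + (xE a + xE' b)) c + Poly_Mapping.single (\<alpha> + (xE b + xE' a)) c"
    by (simp add: distrib_left single_mult_Var)
  have "eq2 (fmon smult c (\<alpha> + (xE a + xE' b)) + fmon smult c (\<alpha> + (xE b + xE' a))) 0"
  proof (cases "\<exists>m. \<alpha> = xX m")
    case True
    then obtain m where ab: "\<alpha> = xX m" by blast
    show ?thesis unfolding fmon_EE1[OF ab] by (rule R_anti)
  next
    case False then show ?thesis by (simp only: fmon_EE0[OF False] diff_zero add_0 eq2_refl)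
  qed
  then show ?thesis unfolding e by (rule eq2_0[OF _ Fin2p])
qed

lemma FG_all: "g \<in> QGens \<Longrightarrow> eq2 (Fin smult (Poly_Mapping.single \<alpha> c * g)) 0"
  unfolding QGens_def
  apply (elim UnE CollectE exE conjE)
  by (simp_all only: FG1 FG2 FG3 FG4 FG5 FG6 FG7 FG8 FG9)

lemma Fin_mult_gen:
  assumes g: "g \<in> QGens"
  shows "eq2 (Fin smult (p * g)) 0"
proof -
  have "p * g = (\<Sum>a\<in>Poly_Mapping.keys p. Poly_Mapping.single a (Poly_Mapping.lookup p a) * g)"
    by (subst (1) poly_sum_singles[symmetric]) (simp add: sum_distrib_right)
  then have "eq2 (Fin smult (p * g)) (\<Sum>a\<in>Poly_Mapping.keys p. Fin smult (Poly_Mapping.single a (Poly_Mapping.lookup p a) * g))"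
    using Fin_sum by simp
  also have "eq2 \<dots> (\<Sum>a\<in>Poly_Mapping.keys p. 0)"
    by (rule eq2_sum) (rule FG_all[OF g])
  finally show ?thesis by simp
qed

lemma Fin_ideal:
  assumes x: "x \<in> gen_ideal QGens"
  shows "eq2 (Fin smult x) 0"
proof -
  have "x \<in> gen_subgroup {p * g |p g. g \<in> QGens}" using x by (simp add: gen_ideal_def)
  then show ?thesis
  proof (induction x rule: gen_subgroup.induct)
    case zero then show ?case by (simp add: eq2_refl)
  next
    case (add g y)
    then obtain p g' where "g = p * g'" "g' \<in> QGens" by blast
    then have g0: "eq2 (Fin smult g) 0" by (simp add: Fin_mult_gen)
    show ?case using eq2_trans[OF Fin_add eq2_add[OF add.IH g0]] by simp
  next
    case (diff g y)
    then obtain p g' where "g = p * g'" "g' \<in> QGens" by blast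
    then have g0: "eq2 (Fin smult g) 0" by (simp add: Fin_mult_gen)
    show ?case using eq2_trans[OF Fin_diff eq2_diff[OF diff.IH g0]] by simp
  qed
qed

end

definition Psi1 :: "('a \<Rightarrow> (('a, 'm) qv, 'a::comm_ring_1) mp) \<Rightarrow> (('a \<times> 'm) \<Rightarrow>\<^sub>0 int) \<Rightarrow> (('a, 'm) qv, 'a) mp" where
  "Psi1 E x = (\<Sum>k\<in>Poly_Mapping.keys x. Const (of_int (Poly_Mapping.lookup x k)) * QX (snd k) * E (fst k))"

lemma Psi1_S: "finite A \<Longrightarrow> Poly_Mapping.keys x \<subseteq> A \<Longrightarrow>
   Psi1 E x = (\<Sum>k\<in>A. Const (of_int (Poly_Mapping.lookup x k)) * QX (snd k) * E (fst k))"
  unfolding Psi1_def by (rule sum.mono_neutral_left) (auto simp: in_keys_iff)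

lemma Psi1_add: "Psi1 E (x + y) = Psi1 E x + Psi1 E y"
proof -
  let ?A = "Poly_Mapping.keys x \<union> Poly_Mapping.keys y"
  have k: "Poly_Mapping.keys (x + y) \<subseteq> ?A" by (rule keys_add)
  show ?thesis
    by (simp add: Psi1_S[OF _ k] Psi1_S[of ?A x] Psi1_S[of ?A y] lookup_add Const_add
        distrib_right sum.distrib)
qed
lemma Psi1_zero[simp]: "Psi1 E 0 = 0" by (simp add: Psi1_def)
lemma Psi1_uminus: "Psi1 E (- x) = - Psi1 E x"
  using Psi1_add[of E x "-x"] by (simp add: eq_neg_iff_add_eq_0 add.commute)
lemma Psi1_diff: "Psi1 E (x - y) = Psi1 E x - Psi1 E y"
  by (metis diff_conv_add_uminus Psi1_add Psi1_uminus)
lemma Psi1_sum: "Psi1 E (\<Sum>i\<in>I. f i) = (\<Sum>i\<in>I. Psi1 E (f i))"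
  by (induction I rule: infinite_finite_induct) (simp_all add: Psi1_add)
lemma Psi1_single: "Psi1 E (Poly_Mapping.single k c) = Const (of_int c) * QX (snd k) * E (fst k)"
  by (cases "c = 0") (simp_all add: Psi1_def)

fun sQ :: "('m \<Rightarrow> ('a \<times> 'm) \<Rightarrow>\<^sub>0 int) \<Rightarrow> (('a + 'm) + ('a + 'm)) + (('a + 'm) + ('a + 'm)) \<Rightarrow> (('a, 'm) qv, 'a::comm_ring_1) mp" where
  "sQ nb (Inl (Inl (Inl a))) = Const a"
| "sQ nb (Inl (Inl (Inr m))) = QX m"
| "sQ nb (Inl (Inr (Inl a))) = QE a"
| "sQ nb (Inl (Inr (Inr m))) = Psi1 (\<lambda>a. QE a) (nb m)"
| "sQ nb (Inr (Inl (Inl a))) = QE' a"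
| "sQ nb (Inr (Inl (Inr m))) = Psi1 (\<lambda>a. QE' a) (nb m)"
| "sQ nb (Inr (Inr v)) = 0"

locale ctx2 = ctx \<iota> smult
  for \<iota> :: "'r::comm_ring_1 \<Rightarrow> 'a::comm_ring_1" and smult :: "'a \<Rightarrow> 'm::ab_group_add \<Rightarrow> 'm" +
  fixes nabla :: "'m \<Rightarrow> ('a \<times> 'm) \<Rightarrow>\<^sub>0 int"
  assumes conn: "module_connection \<iota> smult nabla"
begin

abbreviation IQ where "IQ \<equiv> gen_ideal QGens"
abbreviation phiQ where "phiQ \<equiv> (\<lambda>r. Const (\<iota> r) :: (('a, 'm) qv, 'a) mp)"
abbreviation evQ where "evQ \<equiv> geval phiQ (sQ nabla)"

lemma rhom_phiQ: "rhom phiQ"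
  by (simp add: rhom_def hom_add hom_mult hom_one Const_add Const_mult)

lemmas evs = geval_add[OF rhom_phiQ] geval_mult[OF rhom_phiQ] geval_diff[OF rhom_phiQ]
  geval_uminus[OF rhom_phiQ] geval_Const[OF rhom_phiQ] geval_Var[OF rhom_phiQ]
  geval_sum[OF rhom_phiQ] geval_zero geval_one[OF rhom_phiQ] sQ.simps

lemma mem_eq: "x = y \<Longrightarrow> y \<in> I \<Longrightarrow> x \<in> I" by simp

lemma QG:
  "QX (m + n) - QX m - QX n \<in> IQ"
  "QX (smult a m) - Const a * QX m \<in> IQ"
  "QE (a + b) - QE a - QE b \<in> IQ"
  "QE' (a + b) - QE' a - QE' b \<in> IQ"
  "QE (a * b) - Const a * QE b - Const b * QE a \<in> IQ"
  "QE' (a * b) - Const a * QE' b - Const b * QE' a \<in> IQ"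
  "QE (\<iota> r) \<in> IQ"
  "QE' (\<iota> r) \<in> IQ"
  "QE a * QE' b + QE b * QE' a \<in> IQ"
  subgoal by (rule gi_base, unfold QGens_def, rule UnI1, rule UnI1, rule UnI1, rule UnI1, rule UnI1, rule UnI1, rule UnI1, rule UnI1, blast)  
  subgoal by (rule gi_base, unfold QGens_def, rule UnI1, rule UnI1, rule UnI1, rule UnI1, rule UnI1, rule UnI1, rule UnI1, rule UnI2, blast)  
  subgoal by (rule gi_base, unfold QGens_def, rule UnI1, rule UnI1, rule UnI1, rule UnI1, rule UnI1, rule UnI1, rule UnI2, blast)  
  subgoal by (rule gi_base, unfold QGens_def, rule UnI1, rule UnI1, rule UnI1, rule UnI1, rule UnI1, rule UnI2, blast)  
  subgoal by (rule gi_base, unfold QGens_def, rule UnI1, rule UnI1, rule UnI1, rule UnI1, rule UnI2, blast)  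
  subgoal by (rule gi_base, unfold QGens_def, rule UnI1, rule UnI1, rule UnI1, rule UnI2, blast)  
  subgoal by (rule gi_base, unfold QGens_def, rule UnI1, rule UnI1, rule UnI2, blast)  
  subgoal by (rule gi_base, unfold QGens_def, rule UnI1, rule UnI2, blast)  
  subgoal by (rule gi_base, unfold QGens_def, rule UnI2, blast)
  done

lemma Psi1_rel:
  assumes hE1: "\<And>a b. E (a + b) - E a - E b \<in> IQ"
    and hE2: "\<And>a b. E (a * b) - Const a * E b - Const b * E a \<in> IQ"
    and hE3: "\<And>r. E (\<iota> r) \<in> IQ"
    and g: "g \<in> OM1_rels \<iota> smult"
  shows "Psi1 E g \<in> IQ"
proof -
  from g consider
      (1) a b m where "g = frag_of (a + b, m) - frag_of (a, m) - frag_of (b, m)"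
    | (2) a m n where "g = frag_of (a, m + n) - frag_of (a, m) - frag_of (a, n)"
    | (3) a b m where "g = frag_of (a * b, m) - frag_of (a, smult b m) - frag_of (b, smult a m)"
    | (4) r m where "g = frag_of (\<iota> r, m)"
    unfolding OM1_rels_def
    apply -
    apply (elim UnE CollectE exE conjE)
    by blast+
  then show ?thesis
  proof cases
    case 1
    show ?thesis unfolding 1
      by (rule mem_eq[OF _ gi_mult[OF hE1[of a b], of "QX m"]])
         (simp add: Psi1_diff Psi1_add Psi1_single algebra_simps)
  next
    case 2
    show ?thesis unfolding 2
      by (rule mem_eq[OF _ gi_mult[OF QG(1)[of m n], of "E a"]])
         (simp add: Psi1_diff Psi1_add Psi1_single algebra_simps)
  next
    case 3
    have "Psi1 E g = QX m * (E (a * b) - Const a * E b - Const b * E a)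
        - E a * (QX (smult b m) - Const b * QX m) - E b * (QX (smult a m) - Const a * QX m)"
      unfolding 3 by (simp add: Psi1_diff Psi1_add Psi1_single algebra_simps)
    then show ?thesis
      by (simp add: gi_diff gi_mult hE2 QG)
  next
    case 4
    show ?thesis unfolding 4
      by (rule mem_eq[OF _ gi_mult[OF hE3[of r], of "QX m"]]) (simp add: Psi1_single algebra_simps)
  qed
qed

lemma Psi1_OM1:
  assumes hE1: "\<And>a b. E (a + b) - E a - E b \<in> IQ"
    and hE2: "\<And>a b. E (a * b) - Const a * E b - Const b * E a \<in> IQ"
    and hE3: "\<And>r. E (\<iota> r) \<in> IQ"
    and xy: "OM1_eq \<iota> smult x y"
  shows "Psi1 E x - Psi1 E y \<in> IQ"
proof -
  have "x - y \<in> gen_subgroup (OM1_rels \<iota> smult)" using xy by (simp add: OM1_eq_def)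
  then have "Psi1 E (x - y) \<in> gen_subgroup {p * g |p g. g \<in> QGens}"
  proof (rule gs_hom[where f="Psi1 E", rotated 2])
    show "Psi1 E (a + b) = Psi1 E a + Psi1 E b" for a b by (rule Psi1_add)
    show "Psi1 E g \<in> gen_subgroup {p * g |p g. g \<in> QGens}" if "g \<in> OM1_rels \<iota> smult" for g
      using Psi1_rel[OF hE1 hE2 hE3 that] by (simp add: gen_ideal_def)
  qed
  then show ?thesis by (simp add: Psi1_diff gen_ideal_def)
qed

lemma Psi1_scale:
  shows "Psi1 E (OM1_scale smult a x) - Const a * Psi1 E x \<in> IQ"
proof -
  have 1: "Psi1 E (OM1_scale smult a x) = (\<Sum>k\<in>Poly_Mapping.keys x.
      Const (of_int (Poly_Mapping.lookup x k)) * QX (smult a (snd k)) * E (fst k))"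
    by (simp add: OM1_scale_def Psi1_sum Psi1_single)
  have "Psi1 E (OM1_scale smult a x) - Const a * Psi1 E x =
     (\<Sum>k\<in>Poly_Mapping.keys x. Const (of_int (Poly_Mapping.lookup x k)) * E (fst k) *
        (QX (smult a (snd k)) - Const a * QX (snd k)))"
    unfolding 1 by (simp add: Psi1_def sum_distrib_left sum_subtractf[symmetric] algebra_simps)
  also have "\<dots> \<in> IQ" by (intro gi_sum gi_mult QG)
  finally show ?thesis .
qed

lemma QE_props:
  "QE (a + b) - QE a - QE b \<in> IQ" "QE (a * b) - Const a * QE b - Const b * QE a \<in> IQ" "QE (\<iota> r) \<in> IQ"
  "QE' (a + b) - QE' a - QE' b \<in> IQ" "QE' (a * b) - Const a * QE' b - Const b * QE' a \<in> IQ" "QE' (\<iota> r) \<in> IQ"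
  by (rule QG)+

lemma Nb_add:
  "Psi1 E (nabla (m + n)) - Psi1 E (nabla m) - Psi1 E (nabla n) \<in> IQ"
  if "\<And>a b. E (a + b) - E a - E b \<in> IQ"
     "\<And>a b. E (a * b) - Const a * E b - Const b * E a \<in> IQ" "\<And>r. E (\<iota> r) \<in> IQ"
  using Psi1_OM1[OF that, of "nabla (m + n)" "nabla m + nabla n"] conn
  by (simp add: module_connection_def Psi1_add diff_diff_eq)

lemma Nb_smult:
  "Psi1 E (nabla (smult a m)) - (Const a * Psi1 E (nabla m) + E a * QX m) \<in> IQ"
  if "\<And>a b. E (a + b) - E a - E b \<in> IQ"
     "\<And>a b. E (a * b) - Const a * E b - Const b * E a \<in> IQ" "\<And>r. E (\<iota> r) \<in> IQ"
proof -
  have "Psi1 E (nabla (smult a m)) - Psi1 E (OM1_scale smult a (nabla m) + frag_of (a, m)) \<in> IQ"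
    using Psi1_OM1[OF that, of "nabla (smult a m)"] conn by (simp add: module_connection_def)
  moreover have "Psi1 E (OM1_scale smult a (nabla m)) - Const a * Psi1 E (nabla m) \<in> IQ"
    by (rule Psi1_scale)
  ultimately have "(Psi1 E (nabla (smult a m)) - Psi1 E (OM1_scale smult a (nabla m) + frag_of (a, m))) +
      (Psi1 E (OM1_scale smult a (nabla m)) - Const a * Psi1 E (nabla m)) \<in> IQ"
    by (rule gi_add)
  then show ?thesis by (simp add: Psi1_add Psi1_single algebra_simps)
qed

lemma NbNb: "QE' a * Psi1 QE x + QE a * Psi1 QE' x \<in> IQ"
proof -
  have "QE' a * Psi1 QE x + QE a * Psi1 QE' x =
     (\<Sum>k\<in>Poly_Mapping.keys x. (Const (of_int (Poly_Mapping.lookup x k)) * QX (snd k)) *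
        (QE (fst k) * QE' a + QE a * QE' (fst k)))"
    by (simp add: Psi1_def sum_distrib_left sum.distrib[symmetric] algebra_simps)
  also have "\<dots> \<in> IQ" by (intro gi_sum gi_mult QG)
  finally show ?thesis .
qed

end

context ctx2
begin

lemma SA_cases:
  assumes "r \<in> SA_rels \<iota> smult"
  obtains (1) a b where "r = Var (Inl (a + b)) - Var (Inl a) - Var (Inl b)"
    | (2) a b where "r = Var (Inl (a * b)) - Var (Inl a) * Var (Inl b)"
    | (3) "r = Var (Inl 1) - 1"
    | (4) c where "r = Var (Inl (\<iota> c)) - Const c"
    | (5) m n where "r = Var (Inr (m + n)) - Var (Inr m) - Var (Inr n)"
    | (6) a m where "r = Var (Inr (smult a m)) - Var (Inl a) * Var (Inr m)"
  using assms unfolding SA_rels_def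
  apply -
  apply (elim UnE CollectE exE conjE insertE)
  by blast+

lemma QE1: "QE 1 \<in> IQ" using QG(7)[of 1] by (simp add: hom_one)
lemma QE'1: "QE' 1 \<in> IQ" using QG(8)[of 1] by (simp add: hom_one)

lemma rel4:
  assumes r: "r \<in> SA_rels \<iota> smult"
  shows "evQ (Emb (Emb r)) \<in> IQ \<and> evQ (Emb (Der r)) \<in> IQ \<and> evQ (Der (Emb r)) \<in> IQ \<and> evQ (Der (Der r)) \<in> IQ"
  using r
proof (cases rule: SA_cases)
  case (1 a b)
  show ?thesis unfolding 1
    apply (intro conjI)
    apply (rule mem_eq[OF _ gi_zero], simp add: Tsimps evs Const_add)
    apply (rule mem_eq[OF _ QG(3)[of a b]], simp add: Tsimps evs)
    apply (rule mem_eq[OF _ QG(4)[of a b]], simp add: Tsimps evs)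
    apply (rule mem_eq[OF _ gi_zero], simp add: Tsimps evs)
    done
next
  case (2 a b)
  show ?thesis unfolding 2
    apply (intro conjI)
    apply (rule mem_eq[OF _ gi_zero], simp add: Tsimps evs Const_mult)
    apply (rule mem_eq[OF _ QG(5)[of a b]], simp add: Tsimps evs algebra_simps)
    apply (rule mem_eq[OF _ QG(6)[of a b]], simp add: Tsimps evs algebra_simps)
    apply (rule mem_eq[OF _ gi_uminus[OF QG(9)[of b a]]], simp add: Tsimps evs algebra_simps)
    done
next
  case 3
  show ?thesis unfolding 3
    apply (intro conjI)
    apply (rule mem_eq[OF _ gi_zero], simp add: Tsimps evs)
    apply (rule mem_eq[OF _ QE1], simp add: Tsimps evs)
    apply (rule mem_eq[OF _ QE'1], simp add: Tsimps evs)
    apply (rule mem_eq[OF _ gi_zero], simp add: Tsimps evs)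
    done
next
  case (4 c)
  show ?thesis unfolding 4
    apply (intro conjI)
    apply (rule mem_eq[OF _ gi_zero], simp add: Tsimps evs)
    apply (rule mem_eq[OF _ QG(7)[of c]], simp add: Tsimps evs)
    apply (rule mem_eq[OF _ QG(8)[of c]], simp add: Tsimps evs)
    apply (rule mem_eq[OF _ gi_zero], simp add: Tsimps evs)
    done
next
  case (5 m n)
  show ?thesis unfolding 5
    apply (intro conjI)
    apply (rule mem_eq[OF _ QG(1)[of m n]], simp add: Tsimps evs)
    apply (rule mem_eq[OF _ Nb_add[of "\<lambda>a. QE a", OF QE_props(1-3)]], simp add: Tsimps evs)
    apply (rule mem_eq[OF _ Nb_add[of "\<lambda>a. QE' a", OF QE_props(4-6)]], simp add: Tsimps evs)
    apply (rule mem_eq[OF _ gi_zero], simp add: Tsimps evs)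
    done
next
  case (6 a m)
  show ?thesis unfolding 6
    apply (intro conjI)
    apply (rule mem_eq[OF _ QG(2)[of a m]], simp add: Tsimps evs)
    apply (rule mem_eq[OF _ Nb_smult[of "\<lambda>a. QE a", OF QE_props(1-3)]], simp add: Tsimps evs algebra_simps)
    apply (rule mem_eq[OF _ Nb_smult[of "\<lambda>a. QE' a", OF QE_props(4-6)]], simp add: Tsimps evs algebra_simps)
    apply (rule mem_eq[OF _ gi_uminus[OF NbNb[of a "nabla m"]]], simp add: Tsimps evs algebra_simps)
    done
qed

lemma J4:
  assumes j: "j \<in> SA_ideal \<iota> smult"
  shows "evQ (Emb (Emb j)) \<in> IQ \<and> evQ (Emb (Der j)) \<in> IQ \<and> evQ (Der (Emb j)) \<in> IQ \<and> evQ (Der (Der j)) \<in> IQ"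
proof -
  have "j \<in> gen_subgroup {p * g |p g. g \<in> SA_rels \<iota> smult}" using j by (simp add: SA_ideal_def gen_ideal_def)
  then show ?thesis
  proof (induction j rule: gen_subgroup.induct)
    case zero then show ?case by (simp add: Tsimps evs gi_zero)
  next
    case (add g y)
    then obtain s r where g: "g = s * r" "r \<in> SA_rels \<iota> smult" by blast
    note R = rel4[OF g(2)]
    have "evQ (Emb (Emb g)) \<in> IQ \<and> evQ (Emb (Der g)) \<in> IQ \<and> evQ (Der (Emb g)) \<in> IQ \<and> evQ (Der (Der g)) \<in> IQ"
      unfolding g(1) using R by (simp add: Tsimps evs gi_add gi_mult gi_mult2)
    with add.IH show ?case by (simp add: Tsimps evs gi_add)
  next
    case (diff g y)
    then obtain s r where g: "g = s * r" "r \<in> SA_rels \<iota> smult" by blast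
    note R = rel4[OF g(2)]
    have "evQ (Emb (Emb g)) \<in> IQ \<and> evQ (Emb (Der g)) \<in> IQ \<and> evQ (Der (Emb g)) \<in> IQ \<and> evQ (Der (Der g)) \<in> IQ"
      unfolding g(1) using R by (simp add: Tsimps evs gi_add gi_mult gi_mult2)
    with diff.IH show ?case by (simp add: Tsimps evs gi_diff)
  qed
qed

lemma T1c:
  assumes t: "t \<in> Tideal (SA_ideal \<iota> smult)"
  shows "evQ (Emb t) \<in> IQ \<and> evQ (Der t) \<in> IQ"
proof -
  have "t \<in> gen_subgroup {p * g |p g. g \<in> Emb ` SA_ideal \<iota> smult \<union> Der ` SA_ideal \<iota> smult}"
    using t by (simp add: Tideal_def gen_ideal_def)
  then show ?thesis
  proof (induction t rule: gen_subgroup.induct)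
    case zero then show ?case by (simp add: Tsimps evs gi_zero)
  next
    case (add g y)
    then obtain q h where g: "g = q * h" "h \<in> Emb ` SA_ideal \<iota> smult \<union> Der ` SA_ideal \<iota> smult" by blast
    have H: "evQ (Emb h) \<in> IQ \<and> evQ (Der h) \<in> IQ" using g(2) J4 by blast
    have "evQ (Emb g) \<in> IQ \<and> evQ (Der g) \<in> IQ"
      unfolding g(1) using H by (simp add: Tsimps evs gi_add gi_mult gi_mult2)
    with add.IH show ?case by (simp add: Tsimps evs gi_add)
  next
    case (diff g y)
    then obtain q h where g: "g = q * h" "h \<in> Emb ` SA_ideal \<iota> smult \<union> Der ` SA_ideal \<iota> smult" by blast
    have H: "evQ (Emb h) \<in> IQ \<and> evQ (Der h) \<in> IQ" using g(2) J4 by blast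
    have "evQ (Emb g) \<in> IQ \<and> evQ (Der g) \<in> IQ"
      unfolding g(1) using H by (simp add: Tsimps evs gi_add gi_mult gi_mult2)
    with diff.IH show ?case by (simp add: Tsimps evs gi_diff)
  qed
qed

lemma T2c:
  assumes x: "(x :: (_, 'r) mp) \<in> T2_ideal \<iota> smult"
  shows "evQ x \<in> IQ"
proof -
  have "x \<in> gen_subgroup {p * g |p g. g \<in> Emb ` Tideal (SA_ideal \<iota> smult) \<union> Der ` Tideal (SA_ideal \<iota> smult)}"
    using x by (simp add: T2_ideal_def Tideal_def[of "Tideal _"] gen_ideal_def)
  then show ?thesis
  proof (induction x rule: gen_subgroup.induct)
    case zero then show ?case by (simp add: gi_zero)
  next
    case (add g y)
    then obtain q h where g: "g = q * h" "h \<in> Emb ` Tideal (SA_ideal \<iota> smult) \<union> Der ` Tideal (SA_ideal \<iota> smult)" by blast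
    have H: "evQ h \<in> IQ" using g(2) T1c by blast
    have "evQ g \<in> IQ" unfolding g(1) using H by (simp add: evs gi_mult)
    with add.IH show ?case by (simp add: evs gi_add)
  next
    case (diff g y)
    then obtain q h where g: "g = q * h" "h \<in> Emb ` Tideal (SA_ideal \<iota> smult) \<union> Der ` Tideal (SA_ideal \<iota> smult)" by blast
    have H: "evQ h \<in> IQ" using g(2) T1c by blast
    have "evQ g \<in> IQ" unfolding g(1) using H by (simp add: evs gi_mult)
    with diff.IH show ?case by (simp add: evs gi_diff)
  qed
qed

end

lemma qmon3_poly: "(Const r * (QX m * (QE a * QE' b)) :: (('a, 'm) qv, 'a::comm_ring_1) mp)
   = Poly_Mapping.single (qmon3 m a b) r"
  by (simp add: Const_def Var_def mult_single qmon3_def add.assoc)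

context ctx2
begin

lemma Fin_evCK: "eq2 (Fin smult (evQ (CK_M nabla m :: (_, 'r) mp))) (Zc nabla m)"
  unfolding CK_M_eq Zc_def
  apply (simp only: evs)
  apply (rule eq2_trans[OF Fin_sum])
  apply (rule eq2_sum)
  apply (rule eq2_trans[OF Fin_sum])
  apply (rule eq2_sum)
  apply (simp only: right_diff_distrib mult.assoc)
  apply (simp only: qmon3_poly)
  apply (simp only: frag_cmul_diff2)
  apply (rule eq2_trans[OF Fin_diff])
  apply (rule eq2_diff)
   apply (rule eq2_trans[OF Fin_single], simp only: fmon_qmon3, rule S_of_int)+
  done

lemma flat_curv:
  assumes "(CK_M nabla m :: (_, 'r) mp) \<in> T2_ideal \<iota> smult" and h: "2 * h = (1::'a)"
  shows "eq2 (curvature nabla m) 0"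
proof -
  have "evQ (CK_M nabla m :: (_, 'r) mp) \<in> IQ" by (rule T2c[OF assms(1)])
  then have "eq2 (Fin smult (evQ (CK_M nabla m :: (_, 'r) mp))) 0" by (rule Fin_ideal)
  then have Z: "eq2 (Zc nabla m) 0" using eq2_trans[OF eq2_sym[OF Fin_evCK]] by blast
  have "eq2 (curvature nabla m) (OM2_scale smult h (Zc nabla m))" by (rule curv_Zc[OF h])
  also have "eq2 \<dots> (OM2_scale smult h 0)" by (rule scale_eq2[OF Z])
  finally show ?thesis by (simp add: OM2_scale_def)
qed

end

theorem mainTheorem12:
  fixes \<iota> :: "'r::comm_ring_1 \<Rightarrow> 'a::comm_ring_1"
    and smult :: "'a \<Rightarrow> 'm::ab_group_add \<Rightarrow> 'm"
    and nabla :: "'m \<Rightarrow> ('a \<times> 'm) \<Rightarrow>\<^sub>0 int"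
  assumes hom_add: "\<And>x y. \<iota> (x + y) = \<iota> x + \<iota> y"
    and hom_mult: "\<And>x y. \<iota> (x * y) = \<iota> x * \<iota> y"
    and hom_one: "\<iota> 1 = 1"
    and M_module: "module smult"
    and conn: "module_connection \<iota> smult nabla"
    and two_unit: "\<exists>h::'a. 2 * h = 1"
  shows "(\<forall>h m. 2 * h = (1::'a) \<longrightarrow>
            OM2_eq \<iota> smult (curvature nabla m)
              (OM2_scale smult h (phi \<iota> smult (CK_M nabla m :: _ \<Rightarrow>\<^sub>0 'r))))
       \<and> ((\<forall>m. OM2_eq \<iota> smult (curvature nabla m) 0) \<longleftrightarrow> flat_conn \<iota> smult nabla)"
proof -
  interpret C: ctx2 \<iota> smult nabla
    using M_module hom_add hom_mult hom_one conn
    by (simp add: ctx2_def ctx_def ctx_axioms_def ctx2_axioms_def)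
  obtain h0 :: 'a where h0: "2 * h0 = 1" using two_unit by blast
  have P1: "\<forall>h m. 2 * h = (1::'a) \<longrightarrow>
            OM2_eq \<iota> smult (curvature nabla m)
              (OM2_scale smult h (phi \<iota> smult (CK_M nabla m :: _ \<Rightarrow>\<^sub>0 'r)))"
    using C.part1 by blast
  have P2: "(\<forall>m. OM2_eq \<iota> smult (curvature nabla m) 0) \<longleftrightarrow> flat_conn \<iota> smult nabla"
  proof
    assume A: "\<forall>m. OM2_eq \<iota> smult (curvature nabla m) 0"
    show "flat_conn \<iota> smult nabla"
      unfolding flat_conn_def
    proof (intro conjI allI)
      fix a
      show "(CK_A nabla a :: _ \<Rightarrow>\<^sub>0 'r) - Var (Inl (Inl (Inl a))) \<in> T2_ideal \<iota> smult"
        by (simp add: CK_A_eq C.I2_zero)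
    next
      fix m
      show "(CK_M nabla m :: _ \<Rightarrow>\<^sub>0 'r) \<in> T2_ideal \<iota> smult"
        using A C.curv_flat by blast
    qed
  next
    assume F: "flat_conn \<iota> smult nabla"
    show "\<forall>m. OM2_eq \<iota> smult (curvature nabla m) 0"
    proof
      fix m
      have "(CK_M nabla m :: _ \<Rightarrow>\<^sub>0 'r) \<in> T2_ideal \<iota> smult" using F by (simp add: flat_conn_def)
      then show "OM2_eq \<iota> smult (curvature nabla m) 0" by (rule C.flat_curv[OF _ h0])
    qed
  qed
  from P1 P2 show ?thesis by blast
qed

end
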